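(* Let $M$ be an ACI-matrix over a field $\mathbb{F}$. If $F_1,F_2$ are factor sets of $M$, then $F_1\cap F_2$ and $F_1\cup F_2$ are factor sets of $M$. If $F_1,F_2$ are semifactor sets of $M$, then $F_1\cap F_2$ and $F_1\cup F_2$ are semifactor sets of $M$.
   Context: Let $\mathbb{F}$ be a field. An ACI-matrix is a matrix with entries in $\mathbb{F}[x_1,\dots,x_k]$ whose entries are polynomials of degree at most one and such that no indeterminate appears in two different columns. A completion is an assignment of values in $\mathbb{F}$ to all indeterminates; $\mathrm{maxRank}(N)$ is the maximum rank of a completion. ACI-matrices (and blocks) of size $0\times q$ ($q>0$, wide degenerate), $p\times 0$ ($p>0$, tall degenerate) and $0\times0$ (void) are allowed. $N$ is FRmR if $\mathrm{maxRank}(N)=\mathrm{rows}(N)$, FCmR if $\mathrm{maxRank}(N)=\mathrm{cols}(N)$; by convention tall degenerate is FRmR, wide degenerate is FCmR, void is both. For an $m\times n$ block matrix $\begin{bmatrix} A & B\\ 0 & C\end{bmatrix}$ with lower-left $r\times s$ zero block, the zero block is Big if $r+s>\max\{m,n\}$, Medium if $r+s=\max\{m,n\}$. For $F=\{f_1<\dots<f_s\}\subseteq\{1,\dots,n\}$ with complement $\{g_1<\dots<g_{n-s}\}$, $Q_F$ is the $n\times n$ permutation matrix such that $MQ_F$ has as columns $f_1,\dots,f_s,g_1,\dots,g_{n-s}$ of $M$ in that order. For an $m\times n$ ACI-matrix $M$, $F$ is a factor set of $M$ if there is a nonsingular constant $m\times m$ matrix $R$ with $RMQ_F=\begin{bmatrix}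 A & B\\ 0 & C\end{bmatrix}$, where $A$ has $\#F$ columns, the zero block is Big, $A$ is FRmR and $C$ is FCmR; $F$ is a semifactor set if the same holds with the zero block Medium. *)

theory Defs
  imports "Jordan_Normal_Form.DL_Rank"
begin

text \<open>An affine polynomial (degree at most one) in the indeterminates x_0, x_1, ... is
  represented by its coefficient function e: e 0 is the constant term and e (Suc v)
  is the coefficient of the indeterminate x_v.\<close>
type_synonym 'a aff = "nat \<Rightarrow> 'a"

definition aci_matrix :: "nat \<Rightarrow> 'a::field aff mat \<Rightarrow> bool" where
  "aci_matrix k M \<longleftrightarrow>
     (\<forall>i<dim_row M. \<forall>j<dim_col M. \<forall>v. k \<le> v \<longrightarrow> (M $$ (i,j)) (Suc v) = 0) \<and>
     (\<forall>v<k. \<forall>i j i' j'. i < dim_row M \<and> j < dim_col M \<and> i' < dim_row M \<and> j' < dim_col M \<and>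
        (M $$ (i,j)) (Suc v) \<noteq> 0 \<and> (M $$ (i',j')) (Suc v) \<noteq> 0 \<longrightarrow> j = j')"

definition completion :: "nat \<Rightarrow> 'a::field aff mat \<Rightarrow> (nat \<Rightarrow> 'a) \<Rightarrow> 'a mat" where
  "completion k M x = mat (dim_row M) (dim_col M)
     (\<lambda>ij. (M $$ ij) 0 + (\<Sum>v<k. (M $$ ij) (Suc v) * x v))"

definition maxRank :: "nat \<Rightarrow> 'a::field aff mat \<Rightarrow> nat" where
  "maxRank k M = Max ((\<lambda>x. vec_space.rank (dim_row M) (completion k M x)) ` UNIV)"

definition FRmR :: "nat \<Rightarrow> 'a::field aff mat \<Rightarrow> bool" where
  "FRmR k N \<longleftrightarrow> dim_col N = 0 \<or> maxRank k N = dim_row N"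

definition FCmR :: "nat \<Rightarrow> 'a::field aff mat \<Rightarrow> bool" where
  "FCmR k N \<longleftrightarrow> dim_row N = 0 \<or> maxRank k N = dim_col N"

definition const_mult :: "'a::field mat \<Rightarrow> 'a aff mat \<Rightarrow> 'a aff mat" where
  "const_mult R M = mat (dim_row R) (dim_col M)
     (\<lambda>(i,j) t. \<Sum>l<dim_col R. R $$ (i,l) * (M $$ (l,j)) t)"

definition col_perm :: "nat set \<Rightarrow> 'b mat \<Rightarrow> 'b mat" where
  "col_perm F M = mat (dim_row M) (dim_col M)
     (\<lambda>(i,j). M $$ (i, (sorted_list_of_set F @ sorted_list_of_set ({0..<dim_col M} - F)) ! j))"

text \<open>Common part of factor / semifactor sets; the relation P compares r+s with max m n,
  where r \<times> s is the size of the lower-left zero block.\<close>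
definition block_set :: "(nat \<Rightarrow> nat \<Rightarrow> bool) \<Rightarrow> nat \<Rightarrow> 'a::field aff mat \<Rightarrow> nat set \<Rightarrow> bool" where
  "block_set P k M F \<longleftrightarrow> F \<subseteq> {0..<dim_col M} \<and>
     (\<exists>R r. R \<in> carrier_mat (dim_row M) (dim_row M) \<and> invertible_mat R \<and> r \<le> dim_row M \<and>
        (case split_block (const_mult R (col_perm F M)) (dim_row M - r) (card F) of
          (A, B, Z, C) \<Rightarrow>
            (\<forall>i<r. \<forall>j<card F. Z $$ (i,j) = (\<lambda>_. 0)) \<and>
            P (r + card F) (max (dim_row M) (dim_col M)) \<and>
            FRmR k A \<and> FCmR k C))"

definition factor_set :: "nat \<Rightarrow> 'a::field aff mat \<Rightarrow> nat set \<Rightarrow> bool" where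
  "factor_set k M F \<longleftrightarrow> block_set (\<lambda>a b. a > b) k M F"

definition semifactor_set :: "nat \<Rightarrow> 'a::field aff mat \<Rightarrow> nat set \<Rightarrow> bool" where
  "semifactor_set k M F \<longleftrightarrow> block_set (\<lambda>a b. a = b) k M F"

end

theory Submission
  imports Defs
begin


definition cindep :: "('r \<Rightarrow> 'c \<Rightarrow> 'a::field) \<Rightarrow> 'r set \<Rightarrow> 'c set \<Rightarrow> bool" where
  "cindep e I J \<longleftrightarrow> finite J \<and>
     (\<forall>c. (\<forall>i\<in>I. (\<Sum>j\<in>J. c j * e i j) = 0) \<longrightarrow> (\<forall>j\<in>J. c j = 0))"

definition crk :: "('r \<Rightarrow> 'c \<Rightarrow> 'a::field) \<Rightarrow> 'r set \<Rightarrow> 'c set \<Rightarrow> nat" where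
  "crk e I S = Max (card ` {J. J \<subseteq> S \<and> cindep e I J})"

lemma sum_delta_l:
  "finite J \<Longrightarrow> (\<Sum>l\<in>J. (if l = j then 1 else 0) * (f l::'a::field)) = (if j \<in> J then f j else 0)"
  by (induction J rule: finite_induct) auto

lemma sum_delta_r:
  "finite J \<Longrightarrow> (\<Sum>l\<in>J. (f l::'a::field) * (if j = l then 1 else 0)) = (if j \<in> J then f j else 0)"
  by (induction J rule: finite_induct) auto

lemma sum_delta_l':
  "finite J \<Longrightarrow> (\<Sum>l\<in>J. (if j = l then 1 else 0) * (f l::'a::field)) = (if j \<in> J then f j else 0)"
  by (induction J rule: finite_induct) auto

lemma indep_empty[simp]: "cindep e I {}"
  unfolding cindep_def by auto

lemma indep_mono:
  assumes "cindep e I J" "J' \<subseteq> J" shows "cindep e I J'"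
  unfolding cindep_def
proof (intro conjI allI impI ballI)
  show "finite J'" using assms unfolding cindep_def by (auto intro: finite_subset)
next
  fix c j assume h: "\<forall>i\<in>I. (\<Sum>j\<in>J'. c j * e i j) = 0" and j: "j \<in> J'"
  define c' where "c' = (\<lambda>j. if j \<in> J' then c j else 0)"
  have fin: "finite J" using assms unfolding cindep_def by auto
  have "\<forall>i\<in>I. (\<Sum>j\<in>J. c' j * e i j) = 0"
  proof
    fix i assume i: "i \<in> I"
    have "(\<Sum>j\<in>J. c' j * e i j) = (\<Sum>j\<in>J'. c' j * e i j)"
      using fin assms(2) by (intro sum.mono_neutral_right) (auto simp: c'_def)
    also have "\<dots> = (\<Sum>j\<in>J'. c j * e i j)" by (simp add: c'_def)
    finally show "(\<Sum>j\<in>J. c' j * e i j) = 0" using h i by simp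
  qed
  then have "\<forall>j\<in>J. c' j = 0" using assms(1) unfolding cindep_def by blast
  then show "c j = 0" using j assms(2) unfolding c'_def by (metis subsetD)
qed

lemma indep_finite: "cindep e I J \<Longrightarrow> finite J"
  unfolding cindep_def by auto

lemma indep_rows_mono:
  assumes "cindep e I J" "I \<subseteq> I'" shows "cindep e I' J"
  using assms unfolding cindep_def by blast

lemma rk_set_finite:
  assumes "finite S"
  shows "finite (card ` {J. J \<subseteq> S \<and> cindep e I J})"
  using assms by (intro finite_imageI) (auto intro: finite_subset[of _ "Pow S"])

lemma rk_ge:
  assumes "finite S" "J \<subseteq> S" "cindep e I J"
  shows "card J \<le> crk e I S"
  unfolding crk_def using assms by (intro Max_ge rk_set_finite) auto

lemma rk_obtain:
  assumes "finite S"
  obtains J where "J \<subseteq> S" "cindep e I J" "card J = crk e I S"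
proof -
  have "crk e I S \<in> card ` {J. J \<subseteq> S \<and> cindep e I J}"
    unfolding crk_def using assms by (intro Max_in rk_set_finite) auto
  then show ?thesis using that by auto
qed

lemma rk_le_card:
  assumes "finite S" shows "crk e I S \<le> card S"
proof -
  obtain J where "J \<subseteq> S" "cindep e I J" "card J = crk e I S" using rk_obtain assms by blast
  then show ?thesis using assms card_mono by metis
qed

lemma rk_mono:
  assumes "finite S'" "S \<subseteq> S'" shows "crk e I S \<le> crk e I S'"
proof -
  obtain J where "J \<subseteq> S" "cindep e I J" "card J = crk e I S"
    using rk_obtain assms finite_subset by metis
  then show ?thesis using rk_ge[of S' J e I] assms by auto
qed

lemma rk_rows_mono:
  assumes "finite S" "I \<subseteq> I'" shows "crk e I S \<le> crk e I' S"
proof -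
  obtain J where "J \<subseteq> S" "cindep e I J" "card J = crk e I S"
    using rk_obtain assms by metis
  then show ?thesis using rk_ge[of S J e I'] assms indep_rows_mono by metis
qed

lemma rk_subadd:
  assumes "finite S1" "finite S2"
  shows "crk e I (S1 \<union> S2) \<le> crk e I S1 + crk e I S2"
proof -
  obtain J where J: "J \<subseteq> S1 \<union> S2" "cindep e I J" "card J = crk e I (S1 \<union> S2)"
    using rk_obtain assms by (metis finite_Un)
  have fJ: "finite J" using J indep_finite by auto
  have "card J \<le> card (J \<inter> S1) + card (J - S1)"
    by (metis Int_Diff_Un card_Un_le)
  also have "card (J \<inter> S1) \<le> crk e I S1"
    by (rule rk_ge[OF assms(1)]) (auto intro: indep_mono[OF J(2)])
  also have "card (J - S1) \<le> crk e I S2"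
    using J(1) by (intro rk_ge[OF assms(2)]) (auto intro: indep_mono[OF J(2)])
  finally show ?thesis using J by simp
qed

lemma rk_zero:
  fixes e :: "'r \<Rightarrow> 'c \<Rightarrow> 'a::field"
  assumes "finite S" "\<forall>i\<in>I. \<forall>j\<in>S. e i j = 0"
  shows "crk e I S = 0"
proof -
  obtain J where J: "J \<subseteq> S" "cindep e I J" "card J = crk e I S"
    using rk_obtain assms by metis
  have "J = {}"
  proof (rule ccontr)
    assume "J \<noteq> {}" then obtain j where j: "j \<in> J" by auto
    have "\<forall>i\<in>I. (\<Sum>j\<in>J. (\<lambda>_. 1) j * e i j) = 0"
      using assms J by (auto intro!: sum.neutral)
    then show False using J(2) j unfolding cindep_def by (auto dest!: spec[of _ "\<lambda>_. 1"])
  qed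
  then show ?thesis using J by simp
qed




lemma wide_solution:
  fixes C :: "'l \<Rightarrow> 'c \<Rightarrow> 'a::field"
  assumes "finite K" "finite J" "card K < card J"
  shows "\<exists>c. (\<exists>j\<in>J. c j \<noteq> 0) \<and> (\<forall>l\<in>K. (\<Sum>j\<in>J. C l j * c j) = 0)"
  using assms
proof (induction K arbitrary: J C rule: finite_induct)
  case empty
  then have "J \<noteq> {}" by auto
  then obtain j where "j \<in> J" by auto
  then show ?case by (intro exI[of _ "\<lambda>_. 1"]) auto
next
  case (insert l K)
  show ?case
  proof (cases "\<forall>j\<in>J. C l j = 0")
    case True
    have "card K < card J" using insert by simp
    from insert.IH[OF insert.prems(1) this, of C] obtain c where
      c: "\<exists>j\<in>J. c j \<noteq> 0" "\<forall>l\<in>K. (\<Sum>j\<in>J. C l j * c j) = 0" by blast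
    show ?thesis using c True by (intro exI[of _ c]) auto
  next
    case False
    then obtain j0 where j0: "j0 \<in> J" "C l j0 \<noteq> 0" by auto
    define J' where "J' = J - {j0}"
    have fJ': "finite J'" using insert.prems unfolding J'_def by auto
    have cJ': "card K < card J'" using insert j0 unfolding J'_def by (simp add: card_Diff_singleton)
    define C' where "C' = (\<lambda>l' j. C l' j - C l' j0 * C l j / C l j0)"
    from insert.IH[OF fJ' cJ', of C'] obtain c' where
      c': "\<exists>j\<in>J'. c' j \<noteq> 0" "\<forall>l'\<in>K. (\<Sum>j\<in>J'. C' l' j * c' j) = 0" by blast
    define S where "S = (\<Sum>j\<in>J'. C l j * c' j)"
    define c where "c = (\<lambda>j. if j = j0 then - S / C l j0 else c' j)"
    have split: "(\<Sum>j\<in>J. D j * c j) = D j0 * c j0 + (\<Sum>j\<in>J'. D j * c' j)" for D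
    proof -
      have "(\<Sum>j\<in>J. D j * c j) = D j0 * c j0 + (\<Sum>j\<in>J'. D j * c j)"
        using j0 insert.prems(1) unfolding J'_def by (simp add: sum.remove)
      also have "(\<Sum>j\<in>J'. D j * c j) = (\<Sum>j\<in>J'. D j * c' j)"
        unfolding c_def J'_def by (intro sum.cong) auto
      finally show ?thesis .
    qed
    have rowl: "(\<Sum>j\<in>J. C l j * c j) = 0"
      using split[of "C l"] j0 unfolding c_def S_def by simp
    have rowK: "(\<Sum>j\<in>J. C l' j * c j) = 0" if l': "l' \<in> K" for l'
    proof -
      have "0 = (\<Sum>j\<in>J'. C' l' j * c' j)" using c' l' by simp
      also have "\<dots> = (\<Sum>j\<in>J'. C l' j * c' j) - C l' j0 / C l j0 * S"
        unfolding C'_def S_def by (simp add: algebra_simps sum_subtractf sum_distrib_left sum_divide_distrib)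
      finally have e: "(\<Sum>j\<in>J'. C l' j * c' j) = C l' j0 / C l j0 * S" by simp
      show ?thesis using split[of "C l'"] e unfolding c_def by (simp add: field_simps)
    qed
    have nz: "\<exists>j\<in>J. c j \<noteq> 0" using c' unfolding c_def J'_def by auto
    show ?thesis using rowl rowK nz by (intro exI[of _ c]) auto
  qed
qed

lemma steinitz:
  fixes e :: "'r \<Rightarrow> 'c \<Rightarrow> 'a::field"
  assumes "finite K" "cindep e I J" "\<forall>j\<in>J. \<forall>i\<in>I. e i j = (\<Sum>l\<in>K. C l j * f i l)"
  shows "card J \<le> card K"
proof (rule ccontr)
  assume "\<not> card J \<le> card K"
  then have "card K < card J" by simp
  from wide_solution[OF assms(1) indep_finite[OF assms(2)] this, of C] obtain c where
    c: "\<exists>j\<in>J. c j \<noteq> 0" "\<forall>l\<in>K. (\<Sum>j\<in>J. C l j * c j) = 0" by blast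
  have "\<forall>i\<in>I. (\<Sum>j\<in>J. c j * e i j) = 0"
  proof
    fix i assume i: "i \<in> I"
    have "(\<Sum>j\<in>J. c j * e i j) = (\<Sum>j\<in>J. c j * (\<Sum>l\<in>K. C l j * f i l))"
      using assms(3) i by (intro sum.cong) auto
    also have "\<dots> = (\<Sum>l\<in>K. f i l * (\<Sum>j\<in>J. C l j * c j))"
      unfolding sum_distrib_left sum_distrib_right by (subst sum.swap) (simp add: mult_ac)
    also have "\<dots> = 0" using c(2) by simp
    finally show "(\<Sum>j\<in>J. c j * e i j) = 0" .
  qed
  then have "\<forall>j\<in>J. c j = 0" using assms(2) unfolding cindep_def by blast
  then show False using c(1) by blast
qed

lemma rk_le_rows:
  fixes e :: "'r \<Rightarrow> 'c \<Rightarrow> 'a::field"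
  assumes "finite I" "finite S"
  shows "crk e I S \<le> card I"
proof -
  obtain J where J: "J \<subseteq> S" "cindep e I J" "card J = crk e I S" using rk_obtain assms by metis
  have "\<forall>j\<in>J. \<forall>i\<in>I. e i j = (\<Sum>l\<in>I. e l j * (if i = l then 1 else 0))"
    using assms(1) by (simp add: sum_delta_r)
  from steinitz[OF assms(1) J(2) this] J show ?thesis by simp
qed

lemma max_spans:
  fixes e :: "'r \<Rightarrow> 'c \<Rightarrow> 'a::field"
  assumes "cindep e I J" "J \<subseteq> S" "\<forall>j\<in>S - J. \<not> cindep e I (insert j J)" "j \<in> S"
  shows "\<exists>a. \<forall>i\<in>I. e i j = (\<Sum>l\<in>J. a l * e i l)"
proof (cases "j \<in> J")
  case True
  have fJ: "finite J" using indep_finite[OF assms(1)] .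
  show ?thesis using True fJ
    by (intro exI[of _ "\<lambda>l. if l = j then 1 else 0"]) (simp add: sum_delta_l)
next
  case False
  have fJ: "finite J" using indep_finite[OF assms(1)] .
  have "\<not> cindep e I (insert j J)" using assms False by auto
  then obtain c where c: "\<forall>i\<in>I. (\<Sum>l\<in>insert j J. c l * e i l) = 0" "\<exists>l\<in>insert j J. c l \<noteq> 0"
    using fJ unfolding cindep_def by auto
  have sp: "(\<Sum>l\<in>insert j J. c l * e i l) = c j * e i j + (\<Sum>l\<in>J. c l * e i l)" for i
    using fJ False by simp
  have cj: "c j \<noteq> 0"
  proof
    assume cj: "c j = 0"
    then have "\<forall>i\<in>I. (\<Sum>l\<in>J. c l * e i l) = 0" using c(1) sp by simp
    then have "\<forall>l\<in>J. c l = 0" using assms(1) unfolding cindep_def by blast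
    then show False using c(2) cj by auto
  qed
  show ?thesis
  proof (intro exI[of _ "\<lambda>l. - c l / c j"] ballI)
    fix i assume i: "i \<in> I"
    have "c j * e i j = - (\<Sum>l\<in>J. c l * e i l)" using c(1) i sp[of i] by (simp add: eq_neg_iff_add_eq_0)
    then have "e i j = - (\<Sum>l\<in>J. c l * e i l) / c j" using cj by (simp add: field_simps)
    also have "\<dots> = (\<Sum>l\<in>J. - c l / c j * e i l)"
      by (simp add: sum_divide_distrib sum_negf[symmetric] field_simps)
    finally show "e i j = (\<Sum>l\<in>J. - c l / c j * e i l)" .
  qed
qed



lemma rk_obtain_max:
  fixes e :: "'r \<Rightarrow> 'c \<Rightarrow> 'a::field"
  assumes "finite S"
  obtains J where "J \<subseteq> S" "cindep e I J" "card J = crk e I S" "\<forall>j\<in>S - J. \<not> cindep e I (insert j J)"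
proof -
  obtain J where J: "J \<subseteq> S" "cindep e I J" "card J = crk e I S" using rk_obtain[of S e I] assms by blast
  have "\<forall>j\<in>S - J. \<not> cindep e I (insert j J)"
  proof (intro ballI notI)
    fix j assume j: "j \<in> S - J" and ind: "cindep e I (insert j J)"
    have "card (insert j J) \<le> crk e I S" using rk_ge[OF assms _ ind] j J by auto
    moreover have "card (insert j J) = Suc (card J)" using j indep_finite[OF J(2)] by simp
    ultimately show False using J by simp
  qed
  then show ?thesis using that J by blast
qed

lemma rk_span:
  fixes e :: "'r \<Rightarrow> 'c \<Rightarrow> 'a::field" and f :: "'r \<Rightarrow> 'd \<Rightarrow> 'a"
  assumes "finite K" "cindep e I J" "\<forall>j\<in>J. \<exists>a. \<forall>i\<in>I. e i j = (\<Sum>l\<in>K. a l * f i l)"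
  shows "card J \<le> crk f I K"
proof -
  obtain K0 where K0: "K0 \<subseteq> K" "cindep f I K0" "card K0 = crk f I K"
      "\<forall>l\<in>K - K0. \<not> cindep f I (insert l K0)"
    using rk_obtain_max[of K f I] assms(1) by blast
  have Bex: "\<forall>l\<in>K. \<exists>b. \<forall>i\<in>I. f i l = (\<Sum>l0\<in>K0. b l0 * f i l0)"
    using max_spans[OF K0(2) K0(1) K0(4)] by blast
  obtain B where B: "\<forall>l\<in>K. \<forall>i\<in>I. f i l = (\<Sum>l0\<in>K0. B l l0 * f i l0)"
    using bchoice[OF Bex] by blast
  obtain A where A: "\<forall>j\<in>J. \<forall>i\<in>I. e i j = (\<Sum>l\<in>K. A j l * f i l)"
    using bchoice[OF assms(3)] by blast
  have "\<forall>j\<in>J. \<forall>i\<in>I. e i j = (\<Sum>l0\<in>K0. (\<Sum>l\<in>K. A j l * B l l0) * f i l0)"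
  proof (intro ballI)
    fix j i assume j: "j \<in> J" and i: "i \<in> I"
    have "e i j = (\<Sum>l\<in>K. A j l * f i l)" using A j i by blast
    also have "\<dots> = (\<Sum>l\<in>K. A j l * (\<Sum>l0\<in>K0. B l l0 * f i l0))"
    proof (rule sum.cong[OF refl])
      fix l assume l: "l \<in> K"
      have Bl: "f i l = (\<Sum>l0\<in>K0. B l l0 * f i l0)" using B l i by blast
      show "A j l * f i l = A j l * (\<Sum>l0\<in>K0. B l l0 * f i l0)" by (subst Bl) (rule refl)
    qed
    also have "\<dots> = (\<Sum>l0\<in>K0. (\<Sum>l\<in>K. A j l * B l l0) * f i l0)"
      unfolding sum_distrib_left sum_distrib_right by (subst sum.swap) (simp add: mult_ac)
    finally show "e i j = (\<Sum>l0\<in>K0. (\<Sum>l\<in>K. A j l * B l l0) * f i l0)" .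
  qed
  from steinitz[OF finite_subset[OF K0(1) assms(1)] assms(2) this] K0 show ?thesis by simp
qed



lemma max_ext:
  fixes e :: "'r \<Rightarrow> 'c \<Rightarrow> 'a::field"
  assumes "finite S" "J \<subseteq> S" "cindep e I J"
  shows "\<exists>J'. J \<subseteq> J' \<and> J' \<subseteq> S \<and> cindep e I J' \<and> (\<forall>j\<in>S - J'. \<not> cindep e I (insert j J'))"
  using assms(2,3)
proof (induction "card (S - J)" arbitrary: J rule: less_induct)
  case less
  show ?case
  proof (cases "\<forall>j\<in>S - J. \<not> cindep e I (insert j J)")
    case True
    then show ?thesis using less.prems by blast
  next
    case False
    then obtain j where j: "j \<in> S - J" "cindep e I (insert j J)" by auto
    have "card (S - insert j J) < card (S - J)"
    proof -
      have "S - insert j J = (S - J) - {j}" by auto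
      moreover have "j \<in> S - J" using j by auto
      ultimately show ?thesis using assms(1) card_Diff1_less[of "S - J" j] by simp
    qed
    moreover have "insert j J \<subseteq> S" using j less.prems by auto
    ultimately obtain J' where "insert j J \<subseteq> J'" "J' \<subseteq> S" "cindep e I J'"
        "\<forall>j\<in>S - J'. \<not> cindep e I (insert j J')"
      using less.hyps[of "insert j J"] j(2) by blast
    then show ?thesis by blast
  qed
qed

lemma rk_indep:
  fixes e :: "'r \<Rightarrow> 'c \<Rightarrow> 'a::field"
  assumes "cindep e I J" shows "crk e I J = card J"
  using rk_le_card[OF indep_finite[OF assms], of e I] rk_ge[OF indep_finite[OF assms] subset_refl assms]
  by simp

lemma rk_submod:
  fixes e :: "'r \<Rightarrow> 'c \<Rightarrow> 'a::field"
  assumes "finite X" "finite Y"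
  shows "crk e I (X \<union> Y) + crk e I (X \<inter> Y) \<le> crk e I X + crk e I Y"
proof -
  obtain I0 where I0: "I0 \<subseteq> X \<inter> Y" "cindep e I I0" "card I0 = crk e I (X \<inter> Y)"
    using rk_obtain[of "X \<inter> Y" e I] assms by blast
  obtain I' where I': "I0 \<subseteq> I'" "I' \<subseteq> X \<union> Y" "cindep e I I'"
      "\<forall>j\<in>(X \<union> Y) - I'. \<not> cindep e I (insert j I')"
    using max_ext[of "X \<union> Y" I0 e I] I0 assms by auto
  have fI': "finite I'" using indep_finite I' by auto
  obtain J where J: "J \<subseteq> X \<union> Y" "cindep e I J" "card J = crk e I (X \<union> Y)"
    using rk_obtain[of "X \<union> Y" e I] assms by blast
  have "\<forall>j\<in>J. \<exists>a. \<forall>i\<in>I. e i j = (\<Sum>l\<in>I'. a l * e i l)"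
    using max_spans[OF I'(3) I'(2) I'(4)] J(1) by blast
  from rk_span[OF fI' J(2) this] have u: "crk e I (X \<union> Y) \<le> card I'"
    using J rk_indep[OF I'(3)] by simp
  have x: "card (I' \<inter> X) \<le> crk e I X"
    by (rule rk_ge[OF assms(1)]) (auto intro: indep_mono[OF I'(3)])
  have y: "card (I' \<inter> Y) \<le> crk e I Y"
    by (rule rk_ge[OF assms(2)]) (auto intro: indep_mono[OF I'(3)])
  have i: "crk e I (X \<inter> Y) \<le> card (I' \<inter> X \<inter> Y)"
  proof -
    have "I0 \<subseteq> I' \<inter> X \<inter> Y" using I0 I' by auto
    then show ?thesis using I0 fI' card_mono[of "I' \<inter> X \<inter> Y" I0] by simp
  qed
  have "card (I' \<inter> X) + card (I' \<inter> Y) = card (I' \<inter> X \<union> I' \<inter> Y) + card (I' \<inter> X \<inter> I' \<inter> Y)"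
    using card_Un_Int[of "I' \<inter> X" "I' \<inter> Y"] fI' by (simp add: Int_ac)
  also have "I' \<inter> X \<union> I' \<inter> Y = I'" using I' by auto
  also have "I' \<inter> X \<inter> I' \<inter> Y = I' \<inter> X \<inter> Y" by auto
  finally show ?thesis using u x y i by linarith
qed



lemma rk_transpose_le:
  fixes e :: "'r \<Rightarrow> 'c \<Rightarrow> 'a::field"
  assumes "finite I" "finite S"
  shows "crk e I S \<le> crk (\<lambda>j i. e i j) S I"
proof -
  obtain B where B: "B \<subseteq> I" "cindep (\<lambda>j i. e i j) S B" "card B = crk (\<lambda>j i. e i j) S I"
      "\<forall>i\<in>I - B. \<not> cindep (\<lambda>j i. e i j) S (insert i B)"
    using rk_obtain_max[OF assms(1), of "\<lambda>j i. e i j" S] by blast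
  have Aex: "\<forall>i\<in>I. \<exists>a. \<forall>j\<in>S. e i j = (\<Sum>b\<in>B. a b * e b j)"
    using max_spans[OF B(2) B(1) B(4)] by simp
  obtain A where A: "\<forall>i\<in>I. \<forall>j\<in>S. e i j = (\<Sum>b\<in>B. A i b * e b j)"
    using bchoice[OF Aex] by blast
  obtain J where J: "J \<subseteq> S" "cindep e I J" "card J = crk e I S" using rk_obtain[of S e I] assms by blast
  have "cindep e B J"
    unfolding cindep_def
  proof (intro conjI allI impI)
    show "finite J" using indep_finite J by auto
  next
    fix c assume h: "\<forall>b\<in>B. (\<Sum>j\<in>J. c j * e b j) = 0"
    have "\<forall>i\<in>I. (\<Sum>j\<in>J. c j * e i j) = 0"
    proof
      fix i assume i: "i \<in> I"
      have "(\<Sum>j\<in>J. c j * e i j) = (\<Sum>j\<in>J. c j * (\<Sum>b\<in>B. A i b * e b j))"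
      proof (rule sum.cong[OF refl])
        fix j assume j: "j \<in> J"
        have Aj: "e i j = (\<Sum>b\<in>B. A i b * e b j)" using A i j J(1) by blast
        show "c j * e i j = c j * (\<Sum>b\<in>B. A i b * e b j)" by (subst Aj) (rule refl)
      qed
      also have "\<dots> = (\<Sum>b\<in>B. A i b * (\<Sum>j\<in>J. c j * e b j))"
        unfolding sum_distrib_left by (subst sum.swap) (simp add: mult_ac)
      also have "\<dots> = 0" using h by simp
      finally show "(\<Sum>j\<in>J. c j * e i j) = 0" .
    qed
    then show "\<forall>j\<in>J. c j = 0" using J(2) unfolding cindep_def by blast
  qed
  then have "card J \<le> crk e B S" using rk_ge[of S J e B] assms J by blast
  also have "\<dots> \<le> card B" using rk_le_rows[of B S e] B assms finite_subset by blast
  finally show ?thesis using J B by simp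
qed

lemma rk_transpose:
  fixes e :: "'r \<Rightarrow> 'c \<Rightarrow> 'a::field"
  assumes "finite I" "finite S"
  shows "crk e I S = crk (\<lambda>j i. e i j) S I"
  using rk_transpose_le[OF assms, of e] rk_transpose_le[OF assms(2,1), of "\<lambda>j i. e i j"]
  by simp

lemma rk_row_subadd:
  fixes e :: "'r \<Rightarrow> 'c \<Rightarrow> 'a::field"
  assumes "finite I1" "finite I2" "finite S"
  shows "crk e (I1 \<union> I2) S \<le> crk e I1 S + crk e I2 S"
  using rk_subadd[OF assms(1,2), of "\<lambda>j i. e i j" S] assms
  by (simp add: rk_transpose[of _ S])

lemma rk_block:
  fixes e :: "'r \<Rightarrow> 'c \<Rightarrow> 'a::field"
  assumes "finite S1" "finite S2" "S1 \<inter> S2 = {}" "\<forall>i\<in>I2. \<forall>j\<in>S1. e i j = 0"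
  shows "crk e I1 S1 + crk e I2 S2 \<le> crk e (I1 \<union> I2) (S1 \<union> S2)"
proof -
  obtain J1 where J1: "J1 \<subseteq> S1" "cindep e I1 J1" "card J1 = crk e I1 S1" using rk_obtain[of S1 e I1] assms by blast
  obtain J2 where J2: "J2 \<subseteq> S2" "cindep e I2 J2" "card J2 = crk e I2 S2" using rk_obtain[of S2 e I2] assms by blast
  have f1: "finite J1" using indep_finite[OF J1(2)] .
  have f2: "finite J2" using indep_finite[OF J2(2)] .
  have dis: "J1 \<inter> J2 = {}" using J1 J2 assms(3) by auto
  have "cindep e (I1 \<union> I2) (J1 \<union> J2)"
    unfolding cindep_def
  proof (intro conjI allI impI)
    show "finite (J1 \<union> J2)" using f1 f2 by simp
  next
    fix c assume h: "\<forall>i\<in>I1 \<union> I2. (\<Sum>j\<in>J1 \<union> J2. c j * e i j) = 0"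
    have sp: "(\<Sum>j\<in>J1 \<union> J2. c j * e i j) = (\<Sum>j\<in>J1. c j * e i j) + (\<Sum>j\<in>J2. c j * e i j)" for i
      using f1 f2 dis by (simp add: sum.union_disjoint)
    have z1: "(\<Sum>j\<in>J1. c j * e i j) = 0" if "i \<in> I2" for i
      using assms(4) that J1(1) by (intro sum.neutral) auto
    have "\<forall>i\<in>I2. (\<Sum>j\<in>J2. c j * e i j) = 0"
    proof
      fix i assume i: "i \<in> I2"
      have "(\<Sum>j\<in>J1 \<union> J2. c j * e i j) = 0" using h i by blast
      then show "(\<Sum>j\<in>J2. c j * e i j) = 0" using sp[of i] z1[OF i] by simp
    qed
    then have c2: "\<forall>j\<in>J2. c j = 0" using J2(2) unfolding cindep_def by blast
    have z2: "(\<Sum>j\<in>J2. c j * e i j) = 0" for i using c2 by simp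
    have "\<forall>i\<in>I1. (\<Sum>j\<in>J1. c j * e i j) = 0"
    proof
      fix i assume i: "i \<in> I1"
      have "(\<Sum>j\<in>J1 \<union> J2. c j * e i j) = 0" using h i by blast
      then show "(\<Sum>j\<in>J1. c j * e i j) = 0" using sp[of i] z2[of i] by simp
    qed
    then have c1: "\<forall>j\<in>J1. c j = 0" using J1(2) unfolding cindep_def by blast
    show "\<forall>j\<in>J1 \<union> J2. c j = 0" using c1 c2 by auto
  qed
  then have "card (J1 \<union> J2) \<le> crk e (I1 \<union> I2) (S1 \<union> S2)"
    using J1 J2 assms by (intro rk_ge) auto
  then show ?thesis using J1 J2 f1 f2 dis by (simp add: card_Un_disjoint)
qed



lemma indep_leftmult:
  fixes e :: "nat \<Rightarrow> 'c \<Rightarrow> 'a::field" and R S :: "nat \<Rightarrow> nat \<Rightarrow> 'a"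
  assumes inv: "\<forall>a<m. \<forall>b<m. (\<Sum>i<m. S a i * R i b) = (if a = b then 1 else 0)"
  shows "cindep (\<lambda>i c. \<Sum>l<m. R i l * e l c) {..<m} J \<longleftrightarrow> cindep e {..<m} J"
proof -
  have key: "(\<forall>i\<in>{..<m}. (\<Sum>j\<in>J. c j * (\<Sum>l<m. R i l * e l j)) = 0) \<longleftrightarrow>
             (\<forall>l\<in>{..<m}. (\<Sum>j\<in>J. c j * e l j) = 0)" for c
  proof -
    define w where "w l = (\<Sum>j\<in>J. c j * e l j)" for l
    have sw: "(\<Sum>j\<in>J. c j * (\<Sum>l<m. R i l * e l j)) = (\<Sum>l<m. R i l * w l)" for i
      unfolding w_def unfolding sum_distrib_left by (subst sum.swap) (simp add: mult_ac)
    have "(\<forall>i<m. (\<Sum>l<m. R i l * w l) = 0) \<longleftrightarrow> (\<forall>l<m. w l = 0)"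
    proof
      assume h: "\<forall>i<m. (\<Sum>l<m. R i l * w l) = 0"
      show "\<forall>l<m. w l = 0"
      proof (intro allI impI)
        fix l' assume l': "l' < m"
        have "w l' = (\<Sum>l<m. (if l' = l then 1 else 0) * w l)" using l' by (simp add: sum_delta_l')
        also have "\<dots> = (\<Sum>l<m. (\<Sum>i<m. S l' i * R i l) * w l)"
          using inv l' by (intro sum.cong) auto
        also have "\<dots> = (\<Sum>i<m. S l' i * (\<Sum>l<m. R i l * w l))"
          unfolding sum_distrib_left sum_distrib_right by (subst sum.swap) (simp add: mult_ac)
        also have "\<dots> = 0" using h by simp
        finally show "w l' = 0" .
      qed
    next
      assume "\<forall>l<m. w l = 0"
      then show "\<forall>i<m. (\<Sum>l<m. R i l * w l) = 0" by simp
    qed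
    then show ?thesis using sw unfolding w_def by auto
  qed
  show ?thesis unfolding cindep_def using key by simp
qed

lemma rk_leftmult:
  fixes e :: "nat \<Rightarrow> 'c \<Rightarrow> 'a::field" and R S :: "nat \<Rightarrow> nat \<Rightarrow> 'a"
  assumes inv: "\<forall>a<m. \<forall>b<m. (\<Sum>i<m. S a i * R i b) = (if a = b then 1 else 0)"
  shows "crk (\<lambda>i c. \<Sum>l<m. R i l * e l c) {..<m} T = crk e {..<m} T"
  unfolding crk_def indep_leftmult[OF inv] by (rule refl)

lemma rk_reindex_rows:
  "crk (\<lambda>i j. e (f i) j) I S = crk e (f ` I) S"
  unfolding crk_def cindep_def by simp

lemma indep_reindex_cols:
  fixes e :: "'r \<Rightarrow> 'c \<Rightarrow> 'a::field"
  assumes "inj_on g J"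
  shows "cindep (\<lambda>i j. e i (g j)) I J \<longleftrightarrow> cindep e I (g ` J)"
proof
  assume h: "cindep (\<lambda>i j. e i (g j)) I J"
  show "cindep e I (g ` J)"
    unfolding cindep_def
  proof (intro conjI allI impI)
    show "finite (g ` J)" using h indep_finite by auto
  next
    fix c assume "\<forall>i\<in>I. (\<Sum>y\<in>g ` J. c y * e i y) = 0"
    then have "\<forall>i\<in>I. (\<Sum>j\<in>J. c (g j) * e i (g j)) = 0" using assms by (simp add: sum.reindex)
    then have "\<forall>j\<in>J. c (g j) = 0" using h unfolding cindep_def by (auto dest!: spec[of _ "\<lambda>j. c (g j)"])
    then show "\<forall>y\<in>g ` J. c y = 0" by auto
  qed
next
  assume h: "cindep e I (g ` J)"
  show "cindep (\<lambda>i j. e i (g j)) I J"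
    unfolding cindep_def
  proof (intro conjI allI impI)
    show "finite J" using h indep_finite assms finite_image_iff by blast
  next
    fix c assume h2: "\<forall>i\<in>I. (\<Sum>j\<in>J. c j * e i (g j)) = 0"
    define c' where "c' y = c (inv_into J g y)" for y
    have "\<forall>i\<in>I. (\<Sum>y\<in>g ` J. c' y * e i y) = 0"
      using h2 assms by (simp add: sum.reindex c'_def)
    then have "\<forall>y\<in>g ` J. c' y = 0" using h unfolding cindep_def by blast
    then show "\<forall>j\<in>J. c j = 0" using assms by (auto simp: c'_def)
  qed
qed

lemma rk_reindex_cols:
  fixes e :: "'r \<Rightarrow> 'c \<Rightarrow> 'a::field"
  assumes "inj_on g S" "finite S"
  shows "crk (\<lambda>i j. e i (g j)) I S = crk e I (g ` S)"
proof (rule antisym)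
  obtain J where J: "J \<subseteq> S" "cindep (\<lambda>i j. e i (g j)) I J" "card J = crk (\<lambda>i j. e i (g j)) I S"
    using rk_obtain[of S "\<lambda>i j. e i (g j)" I] assms by blast
  have ij: "inj_on g J" using assms(1) J(1) inj_on_subset by blast
  have "cindep e I (g ` J)" using indep_reindex_cols[OF ij, of e I] J(2) by simp
  then have "card (g ` J) \<le> crk e I (g ` S)" using assms J by (intro rk_ge) auto
  then show "crk (\<lambda>i j. e i (g j)) I S \<le> crk e I (g ` S)" using J ij by (simp add: card_image)
next
  obtain J' where J': "J' \<subseteq> g ` S" "cindep e I J'" "card J' = crk e I (g ` S)"
    using rk_obtain[of "g ` S" e I] assms by blast
  define J where "J = S \<inter> g -` J'"
  have gJ: "g ` J = J'" using J' unfolding J_def by auto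
  have ij: "inj_on g J" using assms(1) unfolding J_def by (auto intro: inj_on_subset)
  have "cindep (\<lambda>i j. e i (g j)) I J" using indep_reindex_cols[OF ij, of e I] J'(2) gJ by simp
  then have "card J \<le> crk (\<lambda>i j. e i (g j)) I S" using assms unfolding J_def by (intro rk_ge) auto
  then show "crk e I (g ` S) \<le> crk (\<lambda>i j. e i (g j)) I S" using J' gJ ij card_image[OF ij] by simp
qed




context vec_space
begin

lemma lin_indpt_empty': "lin_indpt {}"
  unfolding lin_dep_def by auto

lemma indep_imp_lin_indpt:
  assumes A: "A \<in> carrier_mat n nc" and J: "J \<subseteq> {..<nc}"
    and ind: "cindep (\<lambda>i j. A $$ (i,j)) {..<n} J"
  shows "inj_on (col A) J" "lin_indpt (col A ` J)"
proof -
  have fJ: "finite J" using indep_finite[OF ind] .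
  have colidx: "col A j $ i = A $$ (i,j)" if "i < n" "j \<in> J" for i j
    using that A J by auto
  show inj: "inj_on (col A) J"
  proof (rule inj_onI, rule ccontr)
    fix j1 j2 assume j1: "j1 \<in> J" and j2: "j2 \<in> J" and eq: "col A j1 = col A j2" and ne: "j1 \<noteq> j2"
    define c where "c j = (if j1 = j then 1 else 0) - (if j2 = j then 1 else (0::'a))" for j
    have "\<forall>i\<in>{..<n}. (\<Sum>j\<in>J. c j * A $$ (i,j)) = 0"
    proof
      fix i assume i: "i \<in> {..<n}"
      have "(\<Sum>j\<in>J. c j * A $$ (i,j)) = A $$ (i,j1) - A $$ (i,j2)"
        unfolding c_def using fJ j1 j2 by (simp add: left_diff_distrib sum_subtractf sum_delta_l')
      also have "\<dots> = 0" using colidx[of i j1] colidx[of i j2] i j1 j2 eq by simp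
      finally show "(\<Sum>j\<in>J. c j * A $$ (i,j)) = 0" .
    qed
    then have "c j1 = 0" using ind j1 unfolding cindep_def by blast
    then show False using ne unfolding c_def by simp
  qed
  show "lin_indpt (col A ` J)"
  proof
    assume "lin_dep (col A ` J)"
    then obtain B a v where B: "finite B" "B \<subseteq> col A ` J" "lincomb a B = 0\<^sub>v n" "v \<in> B" "a v \<noteq> 0"
      unfolding lin_dep_def by auto
    define c where "c j = (if col A j \<in> B then a (col A j) else 0)" for j
    have Bc: "B \<subseteq> carrier_vec n" using B(2) A unfolding carrier_vec_def by auto
    have "\<forall>i\<in>{..<n}. (\<Sum>j\<in>J. c j * A $$ (i,j)) = 0"
    proof
      fix i assume i: "i \<in> {..<n}"
      let ?J' = "J \<inter> col A -` B"
      have "(\<Sum>j\<in>J. c j * A $$ (i,j)) = (\<Sum>j\<in>?J'. c j * A $$ (i,j))"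
        using fJ by (intro sum.mono_neutral_right) (auto simp: c_def)
      also have "\<dots> = (\<Sum>j\<in>?J'. a (col A j) * col A j $ i)"
        using colidx i by (intro sum.cong) (auto simp: c_def)
      also have "\<dots> = (\<Sum>x\<in>col A ` ?J'. a x * x $ i)"
        using inj by (subst sum.reindex) (auto intro: inj_on_subset)
      also have "col A ` ?J' = B" using B(2) by auto
      also have "(\<Sum>x\<in>B. a x * x $ i) = lincomb a B $ i"
        using lincomb_index[OF _ Bc] i by simp
      also have "\<dots> = 0" using B(3) i by simp
      finally show "(\<Sum>j\<in>J. c j * A $$ (i,j)) = 0" .
    qed
    then have c0: "\<forall>j\<in>J. c j = 0" using ind unfolding cindep_def by blast
    obtain j0 where j0: "j0 \<in> J" "v = col A j0" using B(2,4) by auto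
    have "c j0 = a v" using j0 B(4) unfolding c_def by simp
    then show False using c0 j0 B(5) by simp
  qed
qed

lemma lin_indpt_imp_indep:
  assumes A: "A \<in> carrier_mat n nc" and J: "J \<subseteq> {..<nc}"
    and inj: "inj_on (col A) J" and li: "lin_indpt (col A ` J)"
  shows "cindep (\<lambda>i j. A $$ (i,j)) {..<n} J"
  unfolding cindep_def
proof (intro conjI allI impI)
  show fJ: "finite J" using J finite_subset by blast
  fix c assume h: "\<forall>i\<in>{..<n}. (\<Sum>j\<in>J. c j * A $$ (i,j)) = 0"
  define a where "a x = c (inv_into J (col A) x)" for x
  have Cc: "col A ` J \<subseteq> carrier_vec n" using A unfolding carrier_vec_def by auto
  have lc: "lincomb a (col A ` J) = 0\<^sub>v n"
  proof (rule eq_vecI)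
    show "dim_vec (lincomb a (col A ` J)) = dim_vec (0\<^sub>v n)"
      using lincomb_closed[OF Cc] by (simp add: a_def)
  next
    fix i assume "i < dim_vec (0\<^sub>v n)"
    then have i: "i < n" by simp
    have "lincomb a (col A ` J) $ i = (\<Sum>x\<in>col A ` J. a x * x $ i)"
      using lincomb_index[OF i Cc] .
    also have "\<dots> = (\<Sum>j\<in>J. a (col A j) * col A j $ i)"
      using inj by (simp add: sum.reindex)
    also have "\<dots> = (\<Sum>j\<in>J. c j * A $$ (i,j))"
      using inj i A J by (intro sum.cong) (auto simp: a_def)
    also have "\<dots> = 0" using h i by simp
    finally show "lincomb a (col A ` J) $ i = 0\<^sub>v n $ i" using i by simp
  qed
  show "\<forall>j\<in>J. c j = 0"
  proof (rule ccontr)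
    assume "\<not> (\<forall>j\<in>J. c j = 0)"
    then obtain j0 where j0: "j0 \<in> J" "c j0 \<noteq> 0" by auto
    have "a (col A j0) = c j0" using inj j0 unfolding a_def by simp
    then have "lin_dep (col A ` J)"
      unfolding lin_dep_def using fJ lc j0
      by (intro exI[of _ "col A ` J"] exI[of _ a] exI[of _ "col A j0"]) auto
    then show False using li by simp
  qed
qed

lemma rank_eq_rk:
  assumes A: "A \<in> carrier_mat n nc"
  shows "rank A = crk (\<lambda>i j. A $$ (i,j)) {..<n} {..<nc}"
proof (rule antisym)
  let ?P = "\<lambda>T. T \<subseteq> set (cols A) \<and> lin_indpt T"
  obtain S where S: "finite S" "maximal S ?P"
    using maximal_exists_superset[of "set (cols A)" ?P "{}"] lin_indpt_empty' by auto
  have r: "rank A = card S" using rank_card_indpt[OF A S(2)] .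
  have "S \<subseteq> set (cols A)" using S(2) unfolding maximal_def by blast
  moreover have "set (cols A) = col A ` {..<nc}" using A unfolding cols_def by (simp add: atLeast0LessThan)
  ultimately have Ssub: "S \<subseteq> col A ` {..<nc}" by simp
  have Sli: "lin_indpt S" using S(2) unfolding maximal_def by auto
  define J where "J = inv_into {..<nc} (col A) ` S"
  have J1: "J \<subseteq> {..<nc}" unfolding J_def
  proof
    fix j assume "j \<in> inv_into {..<nc} (col A) ` S"
    then obtain v where v: "v \<in> S" "j = inv_into {..<nc} (col A) v" by auto
    have "v \<in> col A ` {..<nc}" using v Ssub by auto
    then show "j \<in> {..<nc}" using v inv_into_into[of v "col A" "{..<nc}"] by simp
  qed
  have fi: "col A (inv_into {..<nc} (col A) x) = x" if "x \<in> S" for x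
    using that Ssub f_inv_into_f[of x "col A" "{..<nc}"] by auto
  have "col A ` J = (\<lambda>x. x) ` S" unfolding J_def image_image
    by (rule image_cong) (auto simp: fi)
  then have colJ: "col A ` J = S" by simp
  have inj: "inj_on (col A) J"
    unfolding J_def by (intro inj_onI) (auto simp: fi)
  have "cindep (\<lambda>i j. A $$ (i,j)) {..<n} J"
    using lin_indpt_imp_indep[OF A J1 inj] colJ Sli by simp
  then have "card J \<le> crk (\<lambda>i j. A $$ (i,j)) {..<n} {..<nc}"
    using J1 by (intro rk_ge) auto
  moreover have "card J = card S" using colJ inj card_image by metis
  ultimately show "rank A \<le> crk (\<lambda>i j. A $$ (i,j)) {..<n} {..<nc}" using r by simp
next
  obtain J where J: "J \<subseteq> {..<nc}" "cindep (\<lambda>i j. A $$ (i,j)) {..<n} J"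
      "card J = crk (\<lambda>i j. A $$ (i,j)) {..<n} {..<nc}"
    using rk_obtain[of "{..<nc}" "\<lambda>i j. A $$ (i,j)" "{..<n}"] by blast
  note ii = indep_imp_lin_indpt[OF A J(1) J(2)]
  have "col A ` J \<subseteq> set (cols A)" using J(1) A unfolding cols_def by auto
  from rank_ge_card_indpt[OF A this ii(2)] have "card (col A ` J) \<le> rank A" .
  then show "crk (\<lambda>i j. A $$ (i,j)) {..<n} {..<nc} \<le> rank A"
    using J(3) card_image[OF ii(1)] by simp
qed

end

lemma rank_eq_rk':
  fixes A :: "'a::field mat"
  shows "vec_space.rank (dim_row A) A = crk (\<lambda>i j. A $$ (i,j)) {..<dim_row A} {..<dim_col A}"
  using vec_space.rank_eq_rk[of A "dim_row A" "dim_col A"] by auto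




lemma rk_cong:
  assumes "\<forall>i\<in>I. \<forall>j\<in>S. e i j = e' i j"
  shows "crk e I S = crk e' I S"
proof -
  have ii: "cindep e I J = cindep e' I J" if J: "J \<subseteq> S" for J
  proof -
    have eq: "(\<Sum>j\<in>J. c j * e i j) = (\<Sum>j\<in>J. c j * e' i j)" if "i \<in> I" for c i
      using assms that J by (intro sum.cong) auto
    show ?thesis unfolding cindep_def by (auto simp: eq)
  qed
  have "{J. J \<subseteq> S \<and> cindep e I J} = {J. J \<subseteq> S \<and> cindep e' I J}" using ii by blast
  then show ?thesis unfolding crk_def by simp
qed

definition evalc :: "nat \<Rightarrow> 'a::field aff \<Rightarrow> (nat \<Rightarrow> 'a) \<Rightarrow> 'a" where
  "evalc k p x = p 0 + (\<Sum>v<k. p (Suc v) * x v)"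

definition cM :: "nat \<Rightarrow> 'a::field aff mat \<Rightarrow> (nat \<Rightarrow> 'a) \<Rightarrow> nat \<Rightarrow> nat \<Rightarrow> 'a" where
  "cM k M x i j = evalc k (M $$ (i,j)) x"

definition ExR :: "nat \<Rightarrow> 'a::field aff mat \<Rightarrow> 'a mat \<Rightarrow> (nat \<Rightarrow> 'a) \<Rightarrow> nat \<Rightarrow> nat \<Rightarrow> 'a" where
  "ExR k M R x i c = (\<Sum>l<dim_row M. R $$ (i,l) * cM k M x l c)"

definition MR :: "nat \<Rightarrow> 'a::field aff mat \<Rightarrow> 'a mat \<Rightarrow> nat set \<Rightarrow> nat set \<Rightarrow> nat" where
  "MR k M R I S = Max (range (\<lambda>x. crk (ExR k M R x) I S))"

definition ZeroB :: "'a::field aff mat \<Rightarrow> 'a mat \<Rightarrow> nat \<Rightarrow> nat set \<Rightarrow> bool" where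
  "ZeroB M R r G \<longleftrightarrow> (\<forall>i. dim_row M - r \<le> i \<longrightarrow> i < dim_row M \<longrightarrow>
      (\<forall>c\<in>G. \<forall>t. (\<Sum>l<dim_row M. R $$ (i,l) * (M $$ (l,c)) t) = 0))"



lemma evalc_lin:
  "evalc k (\<lambda>t. \<Sum>l<m. a l * P l t) x = (\<Sum>l<m. a l * evalc k (P l) x)"
proof -
  have "(\<Sum>v<k. (\<Sum>l<m. a l * P l (Suc v)) * x v) = (\<Sum>l<m. a l * (\<Sum>v<k. P l (Suc v) * x v))"
    unfolding sum_distrib_left sum_distrib_right by (subst sum.swap) (simp add: mult_ac)
  then show ?thesis unfolding evalc_def distrib_left sum.distrib by simp
qed



lemma completion_dims[simp]:
  "dim_row (completion k N x) = dim_row N" "dim_col (completion k N x) = dim_col N"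
  unfolding completion_def by auto

lemma completion_index:
  "i < dim_row N \<Longrightarrow> j < dim_col N \<Longrightarrow> completion k N x $$ (i,j) = evalc k (N $$ (i,j)) x"
  unfolding completion_def evalc_def by auto




lemma finite_range_rk:
  assumes "finite S"
  shows "finite (range (\<lambda>x. crk (f x) I S))"
proof -
  have "range (\<lambda>x. crk (f x) I S) \<subseteq> {..card S}"
    using rk_le_card[OF assms] by auto
  then show ?thesis by (rule finite_subset) simp
qed

lemma MR_ge:
  assumes "finite S" shows "crk (ExR k M R x) I S \<le> MR k M R I S"
  unfolding MR_def using finite_range_rk[OF assms, of "ExR k M R" I] by (rule Max_ge) simp

lemma MR_obtain:
  assumes "finite S" shows "\<exists>x. MR k M R I S = crk (ExR k M R x) I S"
proof -
  have "MR k M R I S \<in> range (\<lambda>x. crk (ExR k M R x) I S)" unfolding MR_def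
    using finite_range_rk[OF assms, of "ExR k M R" I] by (rule Max_in) simp
  then show ?thesis by auto
qed




lemma maxRank_rk:
  "maxRank k N = Max (range (\<lambda>x. crk (cM k N x) {..<dim_row N} {..<dim_col N}))"
proof -
  have "vec_space.rank (dim_row N) (completion k N x) = crk (cM k N x) {..<dim_row N} {..<dim_col N}" for x
  proof -
    have "vec_space.rank (dim_row N) (completion k N x) =
        crk (\<lambda>i j. completion k N x $$ (i,j)) {..<dim_row N} {..<dim_col N}"
      using rank_eq_rk'[of "completion k N x"] by simp
    also have "\<dots> = crk (cM k N x) {..<dim_row N} {..<dim_col N}"
      by (rule rk_cong) (simp add: completion_index cM_def)
    finally show ?thesis .
  qed
  then show ?thesis unfolding maxRank_def by presburger
qed

lemma maxRank_ge:
  "crk (cM k N x) {..<dim_row N} {..<dim_col N} \<le> maxRank k N"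
  unfolding maxRank_rk using finite_range_rk[of "{..<dim_col N}" "cM k N" "{..<dim_row N}"]
  by (rule Max_ge) auto

lemma maxRank_obtain:
  "\<exists>x. maxRank k N = crk (cM k N x) {..<dim_row N} {..<dim_col N}"
proof -
  have "maxRank k N \<in> range (\<lambda>x. crk (cM k N x) {..<dim_row N} {..<dim_col N})"
    unfolding maxRank_rk using finite_range_rk[of "{..<dim_col N}" "cM k N" "{..<dim_row N}"]
    by (rule Max_in) auto
  then show ?thesis by auto
qed




definition sigL :: "nat set \<Rightarrow> nat \<Rightarrow> nat list" where
  "sigL F n = sorted_list_of_set F @ sorted_list_of_set ({0..<n} - F)"

lemma nth_img_inj:
  assumes "distinct xs"
  shows "inj_on ((!) xs) {..<length xs}" "(!) xs ` {..<length xs} = set xs"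
  using assms by (auto simp: inj_on_nth set_conv_nth)

lemma sig_props:
  assumes F: "F \<subseteq> {0..<n}"
  defines "sF \<equiv> sorted_list_of_set F" and "sG \<equiv> sorted_list_of_set ({0..<n} - F)"
  shows "length sF = card F" "length sG = n - card F"
    "j < card F \<Longrightarrow> sigL F n ! j = sF ! j"
    "j < n - card F \<Longrightarrow> sigL F n ! (j + card F) = sG ! j"
    "j < n \<Longrightarrow> sigL F n ! j < n"
    "inj_on ((!) sF) {..<card F}" "(!) sF ` {..<card F} = F"
    "inj_on ((!) sG) {..<n - card F}" "(!) sG ` {..<n - card F} = {0..<n} - F"
proof -
  have fF: "finite F" using F finite_subset by blast
  show lF: "length sF = card F" unfolding sF_def using fF by simp
  have cG: "card ({0..<n} - F) = n - card F" using F fF by (simp add: card_Diff_subset)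
  show lG: "length sG = n - card F" unfolding sG_def using cG by simp
  show "j < card F \<Longrightarrow> sigL F n ! j = sF ! j" unfolding sigL_def sF_def sG_def
    using lF[unfolded sF_def] by (simp add: nth_append)
  show "j < n - card F \<Longrightarrow> sigL F n ! (j + card F) = sG ! j" unfolding sigL_def sF_def sG_def
    using lF[unfolded sF_def] by (simp add: nth_append)
  have dF: "distinct sF" and dG: "distinct sG" unfolding sF_def sG_def by simp_all
  have setF: "set sF = F" unfolding sF_def using fF by simp
  have setG: "set sG = {0..<n} - F" unfolding sG_def by simp
  have "set (sigL F n) = {0..<n}" unfolding sigL_def using setF setG F
    unfolding sF_def sG_def by auto
  moreover have "length (sigL F n) = n" unfolding sigL_def using lF lG
    unfolding sF_def sG_def using card_mono[OF _ F] by simp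
  ultimately show "j < n \<Longrightarrow> sigL F n ! j < n"
    by (metis atLeastLessThan_iff nth_mem)
  show "inj_on ((!) sF) {..<card F}" "(!) sF ` {..<card F} = F"
    using nth_img_inj[OF dF] lF setF by simp_all
  show "inj_on ((!) sG) {..<n - card F}" "(!) sG ` {..<n - card F} = {0..<n} - F"
    using nth_img_inj[OF dG] lG setG by simp_all
qed

lemma X_index:
  fixes M :: "'a::field aff mat"
  assumes R: "R \<in> carrier_mat (dim_row M) (dim_row M)" and i: "i < dim_row M" and j: "j < dim_col M"
  shows "evalc k (const_mult R (col_perm F M) $$ (i,j)) x = ExR k M R x i (sigL F (dim_col M) ! j)"
proof -
  have "const_mult R (col_perm F M) $$ (i,j) =
      (\<lambda>t. \<Sum>l<dim_row M. R $$ (i,l) * (M $$ (l, sigL F (dim_col M) ! j)) t)"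
    using R i j unfolding const_mult_def col_perm_def sigL_def by (auto intro!: sum.cong)
  then show ?thesis unfolding ExR_def cM_def by (simp add: evalc_lin)
qed

lemma shift_img:
  assumes "r \<le> (m::nat)" shows "(\<lambda>i. i + (m - r)) ` {..<r} = {m - r..<m}"
proof
  show "(\<lambda>i. i + (m - r)) ` {..<r} \<subseteq> {m - r..<m}" using assms by auto
  show "{m - r..<m} \<subseteq> (\<lambda>i. i + (m - r)) ` {..<r}"
  proof
    fix y assume y: "y \<in> {m - r..<m}"
    then have "y = (y - (m - r)) + (m - r)" "y - (m - r) < r" using assms by auto
    then show "y \<in> (\<lambda>i. i + (m - r)) ` {..<r}" by (metis imageI lessThan_iff)
  qed
qed




lemma block_char:
  fixes M :: "'a::field aff mat"
  assumes R: "R \<in> carrier_mat (dim_row M) (dim_row M)" and r: "r \<le> dim_row M"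
    and F: "F \<subseteq> {0..<dim_col M}"
  shows "(case split_block (const_mult R (col_perm F M)) (dim_row M - r) (card F) of
          (A, B, Z, C) \<Rightarrow>
            (\<forall>i<r. \<forall>j<card F. Z $$ (i,j) = (\<lambda>_. 0)) \<and>
            P (r + card F) (max (dim_row M) (dim_col M)) \<and>
            FRmR k A \<and> FCmR k C) \<longleftrightarrow>
     ZeroB M R r F \<and> P (r + card F) (max (dim_row M) (dim_col M)) \<and>
     (card F = 0 \<or> MR k M R {..<dim_row M - r} F = dim_row M - r) \<and>
     (r = 0 \<or> MR k M R {dim_row M - r..<dim_row M} ({..<dim_col M} - F) = dim_col M - card F)"
proof -
  define m where "m = dim_row M"
  define n where "n = dim_col M"
  define X where "X = const_mult R (col_perm F M)"
  define sF where "sF = sorted_list_of_set F"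
  define sG where "sG = sorted_list_of_set ({0..<n} - F)"
  note sp = sig_props[OF F[folded n_def], folded sF_def sG_def]
  have cFn: "card F \<le> n" using card_mono[OF _ F] unfolding n_def by simp
  have dX: "dim_row X = m" "dim_col X = n" using R unfolding X_def const_mult_def col_perm_def m_def n_def by auto
  define A where "A = mat (m - r) (card F) (\<lambda>ij. X $$ ij)"
  define B where "B = mat (m - r) (n - card F) (\<lambda>(i,j). X $$ (i, j + card F))"
  define Z where "Z = mat r (card F) (\<lambda>(i,j). X $$ (i + (m - r), j))"
  define C where "C = mat r (n - card F) (\<lambda>(i,j). X $$ (i + (m - r), j + card F))"
  have sb: "split_block X (m - r) (card F) = (A, B, Z, C)"
    unfolding split_block_def Let_def dX A_def B_def Z_def C_def using r unfolding m_def by simp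
  have Xev: "evalc k (X $$ (i,j)) x = ExR k M R x i (sigL F n ! j)" if "i < m" "j < n" for i j x
    using X_index[OF R, of i j k F x] that unfolding X_def m_def n_def by simp
  have Xz: "X $$ (i,j) = (\<lambda>t. \<Sum>l<m. R $$ (i,l) * (M $$ (l, sigL F n ! j)) t)" if "i < m" "j < n" for i j
    using R that unfolding X_def const_mult_def col_perm_def sigL_def m_def n_def by (auto intro!: sum.cong)
  have zero: "(\<forall>i<r. \<forall>j<card F. Z $$ (i,j) = (\<lambda>_. 0)) \<longleftrightarrow> ZeroB M R r F"
  proof
    assume h: "\<forall>i<r. \<forall>j<card F. Z $$ (i,j) = (\<lambda>_. 0)"
    show "ZeroB M R r F" unfolding ZeroB_def m_def[symmetric]
    proof (intro allI impI ballI)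
      fix i c t assume i1: "m - r \<le> i" and i2: "i < m" and c: "c \<in> F"
      obtain j where j: "j < card F" "c = sF ! j" using c sp(7) by auto
      have jn: "j < n" using j cFn by simp
      have "Z $$ (i - (m - r), j) = (\<lambda>_. 0)" using h i1 i2 j r by auto
      then have "X $$ (i, j) = (\<lambda>_. 0)" using i1 i2 j unfolding Z_def by simp
      then have "(\<lambda>t. \<Sum>l<m. R $$ (i,l) * (M $$ (l, sigL F n ! j)) t) = (\<lambda>_. 0)" using Xz[OF i2 jn] by simp
      then show "(\<Sum>l<m. R $$ (i,l) * (M $$ (l, c)) t) = 0" using sp(3)[OF j(1)] j(2) by (metis (no_types))
    qed
  next
    assume h: "ZeroB M R r F"
    show "\<forall>i<r. \<forall>j<card F. Z $$ (i,j) = (\<lambda>_. 0)"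
    proof (intro allI impI)
      fix i j assume i: "i < r" and j: "j < card F"
      have jn: "j < n" using j cFn by simp
      have im: "i + (m - r) < m" using i r unfolding m_def by simp
      have c: "sF ! j \<in> F" using sp(7) j by auto
      have "Z $$ (i,j) = X $$ (i + (m - r), j)" using i j unfolding Z_def by simp
      also have "\<dots> = (\<lambda>t. \<Sum>l<m. R $$ (i + (m - r),l) * (M $$ (l, sF ! j)) t)"
        using Xz[OF im jn] sp(3)[OF j] by simp
      also have "\<dots> = (\<lambda>_. 0)" using h c im unfolding ZeroB_def m_def[symmetric] by auto
      finally show "Z $$ (i,j) = (\<lambda>_. 0)" .
    qed
  qed
  have rkA: "crk (cM k A x) {..<m - r} {..<card F} = crk (ExR k M R x) {..<m - r} F" for x
  proof -
    have "crk (cM k A x) {..<m - r} {..<card F} = crk (\<lambda>i j. ExR k M R x i (sF ! j)) {..<m - r} {..<card F}"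
    proof (rule rk_cong, intro ballI)
      fix i j assume i: "i \<in> {..<m - r}" and j: "j \<in> {..<card F}"
      have "cM k A x i j = evalc k (X $$ (i,j)) x" using i j unfolding cM_def A_def by simp
      also have "\<dots> = ExR k M R x i (sF ! j)" using Xev[of i j x] sp(3)[of j] i j cFn by simp
      finally show "cM k A x i j = ExR k M R x i (sF ! j)" .
    qed
    also have "\<dots> = crk (ExR k M R x) {..<m - r} F"
      using rk_reindex_cols[OF sp(6), of "ExR k M R x" "{..<m - r}"] sp(7) by simp
    finally show ?thesis .
  qed
  have dA: "dim_row A = m - r" "dim_col A = card F" unfolding A_def by simp_all
  have FA: "FRmR k A \<longleftrightarrow> (card F = 0 \<or> MR k M R {..<m - r} F = m - r)"
    unfolding FRmR_def maxRank_rk dA rkA MR_def by simp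
  have rkC: "crk (cM k C x) {..<r} {..<n - card F} = crk (ExR k M R x) {m - r..<m} ({0..<n} - F)" for x
  proof -
    have "crk (cM k C x) {..<r} {..<n - card F} = crk (\<lambda>i j. ExR k M R x (i + (m - r)) (sG ! j)) {..<r} {..<n - card F}"
    proof (rule rk_cong, intro ballI)
      fix i j assume i: "i \<in> {..<r}" and j: "j \<in> {..<n - card F}"
      have im: "i + (m - r) < m" using i r unfolding m_def by simp
      have jn: "j + card F < n" using j by simp
      have "cM k C x i j = evalc k (X $$ (i + (m - r), j + card F)) x" using i j unfolding cM_def C_def by simp
      also have "\<dots> = ExR k M R x (i + (m - r)) (sG ! j)" using Xev[OF im jn, of x] sp(4)[of j] j by simp
      finally show "cM k C x i j = ExR k M R x (i + (m - r)) (sG ! j)" .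
    qed
    also have "\<dots> = crk (\<lambda>i j. ExR k M R x (i + (m - r)) j) {..<r} ({0..<n} - F)"
      using rk_reindex_cols[OF sp(8), of "\<lambda>i j. ExR k M R x (i + (m - r)) j" "{..<r}"] sp(9) by simp
    also have "\<dots> = crk (ExR k M R x) ((\<lambda>i. i + (m - r)) ` {..<r}) ({0..<n} - F)"
      using rk_reindex_rows[of "ExR k M R x" "\<lambda>i. i + (m - r)"] by simp
    also have "(\<lambda>i. i + (m - r)) ` {..<r} = {m - r..<m}" using shift_img r unfolding m_def by simp
    finally show ?thesis .
  qed
  have dC: "dim_row C = r" "dim_col C = n - card F" unfolding C_def by simp_all
  have FC: "FCmR k C \<longleftrightarrow> (r = 0 \<or> MR k M R {m - r..<m} ({0..<n} - F) = n - card F)"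
    unfolding FCmR_def maxRank_rk dC rkC MR_def by simp
  have e0: "{0..<n} = {..<n}" by auto
  show ?thesis
    unfolding X_def[symmetric] m_def[symmetric] n_def[symmetric] sb using zero FA FC e0 by auto
qed




lemma inv_left:
  fixes R :: "'a::field mat"
  assumes R: "R \<in> carrier_mat m m" and inv: "invertible_mat R"
  shows "\<exists>S. \<forall>a<m. \<forall>b<m. (\<Sum>i<m. S a i * R $$ (i,b)) = (if a = b then 1 else 0)"
proof -
  obtain B where B: "R * B = 1\<^sub>m (dim_row R)" "B * R = 1\<^sub>m (dim_row B)"
    using inv unfolding invertible_mat_def inverts_mat_def by blast
  have dB: "dim_row B = m"
  proof -
    have "dim_col (B * R) = m" using R by simp
    then show ?thesis using B(2) by (metis index_one_mat(3))
  qed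
  have dcB: "dim_col B = m"
  proof -
    have "dim_col (R * B) = dim_col B" by simp
    then show ?thesis using B(1) R by (metis carrier_matD(1) index_one_mat(3))
  qed
  have "(\<Sum>i<m. B $$ (a,i) * R $$ (i,b)) = (if a = b then 1 else 0)" if a: "a < m" and b: "b < m" for a b
  proof -
    have "(B * R) $$ (a,b) = row B a \<bullet> col R b" using a b dB R by simp
    also have "\<dots> = (\<Sum>i<m. B $$ (a,i) * R $$ (i,b))"
      unfolding scalar_prod_def using R b dB dcB a
      by (simp add: atLeast0LessThan)
    finally have "(\<Sum>i<m. B $$ (a,i) * R $$ (i,b)) = (B * R) $$ (a,b)" by simp
    also have "\<dots> = (if a = b then 1 else 0)" using B(2) dB a b by simp
    finally show ?thesis .
  qed
  then show ?thesis by (intro exI[of _ "\<lambda>a i. B $$ (a,i)"]) auto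
qed

lemma dimB: "B \<in> carrier_mat (dim_row M) nc \<Longrightarrow> True" by simp

lemma rk_Ex_cM:
  fixes M :: "'a::field aff mat"
  assumes R: "R \<in> carrier_mat (dim_row M) (dim_row M)" and inv: "invertible_mat R"
  shows "crk (ExR k M R x) {..<dim_row M} T = crk (cM k M x) {..<dim_row M} T"
proof -
  obtain S where S: "\<forall>a<dim_row M. \<forall>b<dim_row M. (\<Sum>i<dim_row M. S a i * R $$ (i,b)) = (if a = b then 1 else 0)"
    using inv_left[OF R inv] by blast
  have "ExR k M R x = (\<lambda>i c. \<Sum>l<dim_row M. (\<lambda>i l. R $$ (i,l)) i l * cM k M x l c)"
    unfolding ExR_def by (intro ext) simp
  then show ?thesis using rk_leftmult[of "dim_row M" S "\<lambda>i l. R $$ (i,l)" "cM k M x" T] S by simp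
qed

lemma Ex_zero:
  fixes M :: "'a::field aff mat"
  assumes "ZeroB M R r G" "dim_row M - r \<le> i" "i < dim_row M" "c \<in> G"
  shows "ExR k M R x i c = 0"
proof -
  have "ExR k M R x i c = evalc k (\<lambda>t. \<Sum>l<dim_row M. R $$ (i,l) * (M $$ (l,c)) t) x"
    unfolding ExR_def cM_def by (simp add: evalc_lin)
  also have "(\<lambda>t. \<Sum>l<dim_row M. R $$ (i,l) * (M $$ (l,c)) t) = (\<lambda>_. 0)"
    using assms unfolding ZeroB_def by auto
  finally show ?thesis by (simp add: evalc_def)
qed

lemma rows_split: "r \<le> (m::nat) \<Longrightarrow> {..<m} = {..<m - r} \<union> {m - r..<m}"
  by auto

lemma UB:
  fixes M :: "'a::field aff mat"
  assumes R: "R \<in> carrier_mat (dim_row M) (dim_row M)" and inv: "invertible_mat R"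
    and r: "r \<le> dim_row M" and Z: "ZeroB M R r G" and G: "G \<subseteq> {..<dim_col M}"
  shows "crk (cM k M x) {..<dim_row M} {..<dim_col M} + r + card G \<le> dim_row M + dim_col M"
proof -
  let ?m = "dim_row M" and ?n = "dim_col M" and ?E = "ExR k M R x"
  have fG: "finite G" using G finite_subset by blast
  have cG: "card G \<le> ?n" using card_mono[OF _ G] by simp
  have "crk (cM k M x) {..<?m} {..<?n} = crk ?E {..<?m} {..<?n}" using rk_Ex_cM[OF R inv] by simp
  also have "\<dots> \<le> crk ?E {..<?m - r} {..<?n} + crk ?E {?m - r..<?m} {..<?n}"
    using rk_row_subadd[of "{..<?m - r}" "{?m - r..<?m}" "{..<?n}" ?E] rows_split[OF r] by simp
  also have "crk ?E {..<?m - r} {..<?n} \<le> ?m - r" using rk_le_rows[of "{..<?m - r}" "{..<?n}" ?E] by simp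
  also have "crk ?E {?m - r..<?m} {..<?n} \<le> crk ?E {?m - r..<?m} G + crk ?E {?m - r..<?m} ({..<?n} - G)"
  proof -
    have "{..<?n} = G \<union> ({..<?n} - G)" using G by auto
    then show ?thesis using rk_subadd[of G "{..<?n} - G" ?E "{?m - r..<?m}"] fG by simp
  qed
  also have "crk ?E {?m - r..<?m} G = 0"
    using fG Ex_zero[OF Z] by (intro rk_zero) auto
  also have "crk ?E {?m - r..<?m} ({..<?n} - G) \<le> ?n - card G"
    using rk_le_card[of "{..<?n} - G" ?E] G fG by (simp add: card_Diff_subset)
  finally show ?thesis using r cG by linarith
qed

lemma LB:
  fixes M :: "'a::field aff mat"
  assumes aci: "aci_matrix k M"
    and R: "R \<in> carrier_mat (dim_row M) (dim_row M)" and inv: "invertible_mat R"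
    and r: "r \<le> dim_row M" and Z: "ZeroB M R r F" and F: "F \<subseteq> {..<dim_col M}"
    and big: "max (dim_row M) (dim_col M) \<le> r + card F"
    and FA: "card F = 0 \<or> MR k M R {..<dim_row M - r} F = dim_row M - r"
    and FC: "r = 0 \<or> MR k M R {dim_row M - r..<dim_row M} ({..<dim_col M} - F) = dim_col M - card F"
  shows "\<exists>x. dim_row M + dim_col M \<le> crk (cM k M x) {..<dim_row M} {..<dim_col M} + r + card F"
proof -
  let ?m = "dim_row M" and ?n = "dim_col M"
  let ?T = "{..<?m - r}" and ?Bo = "{?m - r..<?m}" and ?Gc = "{..<?n} - F"
  have fF: "finite F" using F finite_subset by blast
  have cF: "card F \<le> ?n" using card_mono[OF _ F] by simp
  obtain xA where xA: "MR k M R ?T F = crk (ExR k M R xA) ?T F" using MR_obtain[OF fF] by blast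
  obtain xC where xC: "MR k M R ?Bo ?Gc = crk (ExR k M R xC) ?Bo ?Gc" using MR_obtain[of ?Gc] by blast
  have hA: "?m - r \<le> crk (ExR k M R xA) ?T F"
  proof (cases "card F = 0")
    case True then show ?thesis using big by simp
  next
    case False then show ?thesis using FA xA by simp
  qed
  have hC: "?n - card F \<le> crk (ExR k M R xC) ?Bo ?Gc"
  proof (cases "r = 0")
    case True then show ?thesis using big by simp
  next
    case False then show ?thesis using FC xC by simp
  qed
  define x where "x v = (if (\<exists>i j. i < ?m \<and> j \<in> F \<and> (M $$ (i,j)) (Suc v) \<noteq> 0) then xA v else xC v)" for v
  have cMA: "cM k M x l c = cM k M xA l c" if l: "l < ?m" and c: "c \<in> F" for l c
    unfolding cM_def evalc_def
  proof (intro arg_cong2[where f = "(+)"] refl sum.cong)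
    fix v assume "v \<in> {..<k}"
    show "(M $$ (l,c)) (Suc v) * x v = (M $$ (l,c)) (Suc v) * xA v"
    proof (cases "(M $$ (l,c)) (Suc v) = 0")
      case True then show ?thesis by simp
    next
      case False
      then have "\<exists>i j. i < ?m \<and> j \<in> F \<and> (M $$ (i,j)) (Suc v) \<noteq> 0" using l c by blast
      then show ?thesis unfolding x_def by simp
    qed
  qed
  have cMC: "cM k M x l c = cM k M xC l c" if l: "l < ?m" and c: "c \<in> ?Gc" for l c
    unfolding cM_def evalc_def
  proof (intro arg_cong2[where f = "(+)"] refl sum.cong)
    fix v assume v: "v \<in> {..<k}"
    show "(M $$ (l,c)) (Suc v) * x v = (M $$ (l,c)) (Suc v) * xC v"
    proof (cases "(M $$ (l,c)) (Suc v) = 0")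
      case True then show ?thesis by simp
    next
      case False
      have "\<not> (\<exists>i j. i < ?m \<and> j \<in> F \<and> (M $$ (i,j)) (Suc v) \<noteq> 0)"
      proof
        assume "\<exists>i j. i < ?m \<and> j \<in> F \<and> (M $$ (i,j)) (Suc v) \<noteq> 0"
        then obtain i j where ij: "i < ?m" "j \<in> F" "(M $$ (i,j)) (Suc v) \<noteq> 0" by blast
        have "j < ?n" using ij F by auto
        then have "j = c" using aci v ij l c False unfolding aci_matrix_def by blast
        then show False using ij c by simp
      qed
      then have "x v = xC v" unfolding x_def by (rule if_not_P)
      then show ?thesis by simp
    qed
  qed
  have EA: "crk (ExR k M R x) ?T F = crk (ExR k M R xA) ?T F"
    by (rule rk_cong) (simp add: ExR_def cMA)
  have EC: "crk (ExR k M R x) ?Bo ?Gc = crk (ExR k M R xC) ?Bo ?Gc"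
    by (rule rk_cong) (simp add: ExR_def cMC)
  have "crk (ExR k M R x) ?T F + crk (ExR k M R x) ?Bo ?Gc \<le> crk (ExR k M R x) (?T \<union> ?Bo) (F \<union> ?Gc)"
    using fF Ex_zero[OF Z] by (intro rk_block) auto
  also have "?T \<union> ?Bo = {..<?m}" using rows_split[OF r] by simp
  also have "F \<union> ?Gc = {..<?n}" using F by auto
  also have "crk (ExR k M R x) {..<?m} {..<?n} = crk (cM k M x) {..<?m} {..<?n}" using rk_Ex_cM[OF R inv] by simp
  finally have "(?m - r) + (?n - card F) \<le> crk (cM k M x) {..<?m} {..<?n}" using EA EC hA hC by linarith
  then show ?thesis using r cF by (intro exI[of _ x]) linarith
qed

definition Nc :: "'a aff mat \<Rightarrow> nat \<Rightarrow> nat \<times> nat \<Rightarrow> 'a" where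
  "Nc M i c = (M $$ (i, fst c)) (snd c)"

definition betaN :: "nat \<Rightarrow> 'a::field aff mat \<Rightarrow> nat set \<Rightarrow> nat" where
  "betaN k M G = crk (Nc M) {..<dim_row M} (G \<times> {..k})"

lemma B1:
  fixes M :: "'a::field aff mat"
  assumes R: "R \<in> carrier_mat (dim_row M) (dim_row M)" and inv: "invertible_mat R"
    and r: "r \<le> dim_row M" and Z: "ZeroB M R r G" and fG: "finite G"
  shows "betaN k M G + r \<le> dim_row M"
proof -
  let ?m = "dim_row M" and ?K = "G \<times> {..k}"
  obtain S where S: "\<forall>a<?m. \<forall>b<?m. (\<Sum>i<?m. S a i * R $$ (i,b)) = (if a = b then 1 else 0)"
    using inv_left[OF R inv] by blast
  let ?E = "\<lambda>i c. \<Sum>l<?m. (\<lambda>i l. R $$ (i,l)) i l * Nc M l c"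
  have fK: "finite ?K" using fG by simp
  have "betaN k M G = crk ?E {..<?m} ?K"
    unfolding betaN_def using rk_leftmult[of ?m S "\<lambda>i l. R $$ (i,l)" "Nc M" ?K] S by simp
  also have "\<dots> \<le> crk ?E {..<?m - r} ?K + crk ?E {?m - r..<?m} ?K"
    using rk_row_subadd[of "{..<?m - r}" "{?m - r..<?m}" ?K ?E] rows_split[OF r] fK by simp
  also have "crk ?E {..<?m - r} ?K \<le> ?m - r" using rk_le_rows[of "{..<?m - r}" ?K ?E] fK by simp
  also have "crk ?E {?m - r..<?m} ?K = 0"
    using fK Z unfolding ZeroB_def Nc_def by (intro rk_zero) auto
  finally show ?thesis using r by linarith
qed




definition dlt :: "nat \<Rightarrow> nat \<Rightarrow> 'a::field" where
  "dlt u w = (if u = w then 1 else 0)"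

lemma sum_del_l:
  assumes "finite S" "u \<in> S" shows "(\<Sum>w\<in>S. dlt u w * f w) = f u"
proof -
  have "(\<Sum>w\<in>S. dlt u w * f w) = (\<Sum>w\<in>S. if u = w then f w else 0)"
    unfolding dlt_def by (intro sum.cong) auto
  also have "\<dots> = f u" using assms by (simp add: sum.delta)
  finally show ?thesis .
qed

lemma sum_del_r:
  assumes "finite S" "v \<in> S" shows "(\<Sum>w\<in>S. f w * dlt w v) = f v"
proof -
  have "(\<Sum>w\<in>S. f w * dlt w v) = (\<Sum>w\<in>S. if v = w then f w else 0)"
    unfolding dlt_def by (intro sum.cong) auto
  also have "\<dots> = f v" using assms by (simp add: sum.delta)
  finally show ?thesis .
qed

lemma B2:
  fixes M :: "'a::field aff mat"
  assumes aci: "aci_matrix k M" and G: "G \<subseteq> {..<dim_col M}"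
  shows "\<exists>R r. R \<in> carrier_mat (dim_row M) (dim_row M) \<and> invertible_mat R \<and> r \<le> dim_row M \<and>
           ZeroB M R r G \<and> betaN k M G + r = dim_row M"
proof -
  define m where "m = dim_row M"
  define K where "K = G \<times> {..k}"
  have fG: "finite G" using G finite_subset by blast
  have fK: "finite K" unfolding K_def using fG by simp
  obtain B where B: "B \<subseteq> {..<m}" "cindep (\<lambda>c i. Nc M i c) K B"
      "card B = crk (\<lambda>c i. Nc M i c) K {..<m}"
      "\<forall>i\<in>{..<m} - B. \<not> cindep (\<lambda>c i. Nc M i c) K (insert i B)"
    using rk_obtain_max[of "{..<m}" "\<lambda>c i. Nc M i c" K] by blast
  have fB: "finite B" using B(1) finite_subset by blast
  have hbeta: "betaN k M G = card B"
    unfolding betaN_def B(3) m_def[symmetric] K_def[symmetric]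
    using rk_transpose[of "{..<m}" K "Nc M"] fK by simp
  have spans: "\<forall>i\<in>{..<m}. \<exists>a. \<forall>c\<in>K. Nc M i c = (\<Sum>b\<in>B. a b * Nc M b c)"
    using max_spans[OF B(2) B(1) B(4)] by auto
  obtain D where D: "\<forall>i\<in>{..<m}. \<forall>c\<in>K. Nc M i c = (\<Sum>b\<in>B. D i b * Nc M b c)"
    using bchoice[OF spans] by blast
  define p where "p = card B"
  have pm: "p \<le> m" unfolding p_def using card_mono[OF _ B(1)] by simp
  define bs where "bs = sorted_list_of_set B"
  define os where "os = sorted_list_of_set ({..<m} - B)"
  define pi where "pi = bs @ os"
  have lbs: "length bs = p" unfolding bs_def p_def using fB by simp
  have los: "length os = m - p" unfolding os_def p_def using B(1) fB by (simp add: card_Diff_subset)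
  have lpi: "length pi = m" unfolding pi_def using lbs los pm by simp
  have sbs: "set bs = B" unfolding bs_def using fB by simp
  have sos: "set os = {..<m} - B" unfolding os_def by simp
  have dpi: "distinct pi" unfolding pi_def using sbs sos unfolding bs_def os_def by auto
  have spi: "set pi = {..<m}" unfolding pi_def using sbs sos B(1) by auto
  have piB: "pi ! i \<notin> B" if "p \<le> i" "i < m" for i
  proof -
    have "pi ! i = os ! (i - p)" unfolding pi_def using that lbs by (simp add: nth_append)
    moreover have "os ! (i - p) \<in> set os" using that los by simp
    ultimately show ?thesis using sos by auto
  qed
  have pilt: "pi ! i < m" if "i < m" for i using that lpi spi nth_mem by fastforce
  define Dm where "Dm u w = (if u \<notin> B \<and> w \<in> B then D u w else 0)" for u w
  define A0 where "A0 u w = dlt u w - Dm u w" for u w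
  define A1 where "A1 u w = dlt u w + Dm u w" for u w
  have DD: "(\<Sum>w<m. Dm u w * Dm w v) = 0" for u v
    by (intro sum.neutral) (auto simp: Dm_def)
  have A01: "(\<Sum>w<m. A0 u w * A1 w v) = dlt u v" if "u < m" "v < m" for u v
  proof -
    have pt: "A0 u w * A1 w v = (dlt u w * dlt w v + dlt u w * Dm w v) - (Dm u w * dlt w v + Dm u w * Dm w v)" for w
      unfolding A0_def A1_def by (simp add: algebra_simps)
    have "(\<Sum>w<m. A0 u w * A1 w v) =
        ((\<Sum>w<m. dlt u w * dlt w v) + (\<Sum>w<m. dlt u w * Dm w v)) - ((\<Sum>w<m. Dm u w * dlt w v) + (\<Sum>w<m. Dm u w * Dm w v))"
      unfolding pt sum_subtractf sum.distrib ..
    also have "\<dots> = dlt u v" using that by (simp add: sum_del_l sum_del_r DD)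
    finally show ?thesis .
  qed
  have A10: "(\<Sum>w<m. A1 u w * A0 w v) = dlt u v" if "u < m" "v < m" for u v
  proof -
    have pt: "A1 u w * A0 w v = (dlt u w * dlt w v + Dm u w * dlt w v) - (dlt u w * Dm w v + Dm u w * Dm w v)" for w
      unfolding A0_def A1_def by (simp add: algebra_simps)
    have "(\<Sum>w<m. A1 u w * A0 w v) =
        ((\<Sum>w<m. dlt u w * dlt w v) + (\<Sum>w<m. Dm u w * dlt w v)) - ((\<Sum>w<m. dlt u w * Dm w v) + (\<Sum>w<m. Dm u w * Dm w v))"
      unfolding pt sum_subtractf sum.distrib ..
    also have "\<dots> = dlt u v" using that by (simp add: sum_del_l sum_del_r DD)
    finally show ?thesis .
  qed
  define R where "R = mat m m (\<lambda>(i,l). A0 (pi ! i) l)"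
  define S where "S = mat m m (\<lambda>(l,i). A1 l (pi ! i))"
  have Rc: "R \<in> carrier_mat m m" unfolding R_def by simp
  have Sc: "S \<in> carrier_mat m m" unfolding S_def by simp
  have RS: "R * S = 1\<^sub>m m"
  proof (rule eq_matI)
    fix i j assume i: "i < dim_row (1\<^sub>m m :: 'a mat)" and j: "j < dim_col (1\<^sub>m m :: 'a mat)"
    then have i: "i < m" and j: "j < m" by simp_all
    have "(R * S) $$ (i,j) = (\<Sum>l<m. A0 (pi ! i) l * A1 l (pi ! j))"
      using i j unfolding R_def S_def by (simp add: scalar_prod_def atLeast0LessThan)
    also have "\<dots> = dlt (pi ! i) (pi ! j)" using A01 pilt i j by simp
    also have "\<dots> = (if i = j then 1 else 0)" unfolding dlt_def using dpi lpi i j nth_eq_iff_index_eq by auto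
    finally show "(R * S) $$ (i,j) = 1\<^sub>m m $$ (i,j)" using i j by simp
  qed (auto simp: R_def S_def)
  have SR: "S * R = 1\<^sub>m m"
  proof (rule eq_matI)
    fix i j assume i: "i < dim_row (1\<^sub>m m :: 'a mat)" and j: "j < dim_col (1\<^sub>m m :: 'a mat)"
    then have i: "i < m" and j: "j < m" by simp_all
    have "(S * R) $$ (i,j) = (\<Sum>l<m. A1 i (pi ! l) * A0 (pi ! l) j)"
      using i j unfolding R_def S_def by (simp add: scalar_prod_def atLeast0LessThan)
    also have "\<dots> = (\<Sum>w\<in>(!) pi ` {..<m}. A1 i w * A0 w j)"
      using nth_img_inj(1)[OF dpi] lpi by (simp add: sum.reindex)
    also have "(!) pi ` {..<m} = {..<m}" using nth_img_inj(2)[OF dpi] lpi spi by simp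
    also have "(\<Sum>w<m. A1 i w * A0 w j) = dlt i j" using A10 i j by simp
    also have "\<dots> = (if i = j then 1 else 0)" unfolding dlt_def by simp
    finally show "(S * R) $$ (i,j) = 1\<^sub>m m $$ (i,j)" using i j by simp
  qed (auto simp: R_def S_def)
  have inv: "invertible_mat R"
    unfolding invertible_mat_def inverts_mat_def square_mat.simps
    using RS SR Rc Sc by (intro conjI exI[of _ S]) auto
  have Z: "ZeroB M R (m - p) G"
    unfolding ZeroB_def m_def[symmetric]
  proof (intro allI impI ballI)
    fix i c t assume i1: "m - (m - p) \<le> i" and i2: "i < m" and c: "c \<in> G"
    have pi: "p \<le> i" using i1 pm by simp
    have cn: "c < dim_col M" using c G by auto
    have Ri: "R $$ (i,l) = A0 (pi ! i) l" if "l < m" for l using i2 that unfolding R_def by simp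
    show "(\<Sum>l<m. R $$ (i,l) * (M $$ (l,c)) t) = 0"
    proof (cases "t \<le> k")
      case False
      then obtain v where v: "t = Suc v" "k \<le> v" by (cases t) auto
      have "(M $$ (l,c)) t = 0" if "l < m" for l
        using aci that cn v unfolding aci_matrix_def m_def by auto
      then show ?thesis by simp
    next
      case True
      have ct: "(c,t) \<in> K" unfolding K_def using c True by simp
      have u: "pi ! i < m" "pi ! i \<notin> B" using pilt[OF i2] piB[OF pi i2] by auto
      have "(\<Sum>l<m. R $$ (i,l) * (M $$ (l,c)) t) = (\<Sum>l<m. A0 (pi ! i) l * (M $$ (l,c)) t)"
        using Ri by simp
      also have "\<dots> = (\<Sum>l<m. dlt (pi ! i) l * (M $$ (l,c)) t) - (\<Sum>l<m. Dm (pi ! i) l * (M $$ (l,c)) t)"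
        unfolding A0_def left_diff_distrib sum_subtractf ..
      also have "(\<Sum>l<m. dlt (pi ! i) l * (M $$ (l,c)) t) = (M $$ (pi ! i, c)) t"
        using u by (simp add: sum_del_l)
      also have "(\<Sum>l<m. Dm (pi ! i) l * (M $$ (l,c)) t) = (\<Sum>l\<in>B. Dm (pi ! i) l * (M $$ (l,c)) t)"
        using B(1) by (intro sum.mono_neutral_right) (auto simp: Dm_def)
      also have "\<dots> = (\<Sum>l\<in>B. D (pi ! i) l * (M $$ (l,c)) t)"
        using u by (intro sum.cong) (auto simp: Dm_def)
      also have "(M $$ (pi ! i, c)) t = (\<Sum>l\<in>B. D (pi ! i) l * (M $$ (l,c)) t)"
      proof -
        have "Nc M (pi ! i) (c,t) = (\<Sum>b\<in>B. D (pi ! i) b * Nc M b (c,t))" using D u(1) ct by blast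
        then show ?thesis unfolding Nc_def by simp
      qed
      finally show ?thesis by simp
    qed
  qed
  show ?thesis
    using Rc inv Z hbeta pm unfolding m_def p_def
    by (intro exI[of _ R] exI[of _ "dim_row M - card B"]) auto
qed




lemma lower_T:
  fixes M :: "'a::field aff mat"
  assumes R: "R \<in> carrier_mat (dim_row M) (dim_row M)" and inv: "invertible_mat R"
    and r: "r \<le> dim_row M" and Z: "ZeroB M R r G" and G: "G \<subseteq> {..<dim_col M}"
  shows "crk (cM k M x) {..<dim_row M} {..<dim_col M} \<le> crk (ExR k M R x) {..<dim_row M - r} G + (dim_col M - card G)"
proof -
  let ?m = "dim_row M" and ?n = "dim_col M" and ?E = "ExR k M R x"
  have fG: "finite G" using G finite_subset by blast
  have "crk (cM k M x) {..<?m} {..<?n} = crk ?E {..<?m} {..<?n}" using rk_Ex_cM[OF R inv] by simp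
  also have "\<dots> \<le> crk ?E {..<?m} G + crk ?E {..<?m} ({..<?n} - G)"
  proof -
    have "{..<?n} = G \<union> ({..<?n} - G)" using G by auto
    then show ?thesis using rk_subadd[of G "{..<?n} - G" ?E "{..<?m}"] fG by simp
  qed
  also have "crk ?E {..<?m} G \<le> crk ?E {..<?m - r} G + crk ?E {?m - r..<?m} G"
    using rk_row_subadd[of "{..<?m - r}" "{?m - r..<?m}" G ?E] rows_split[OF r] fG by simp
  also have "crk ?E {?m - r..<?m} G = 0"
    using fG Ex_zero[OF Z] by (intro rk_zero) auto
  also have "crk ?E {..<?m} ({..<?n} - G) \<le> ?n - card G"
    using rk_le_card[of "{..<?n} - G" ?E] G fG by (simp add: card_Diff_subset)
  finally show ?thesis by linarith
qed

lemma lower_Bo: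
  fixes M :: "'a::field aff mat"
  assumes R: "R \<in> carrier_mat (dim_row M) (dim_row M)" and inv: "invertible_mat R"
    and r: "r \<le> dim_row M" and Z: "ZeroB M R r G" and G: "G \<subseteq> {..<dim_col M}"
  shows "crk (cM k M x) {..<dim_row M} {..<dim_col M} \<le> (dim_row M - r) + crk (ExR k M R x) {dim_row M - r..<dim_row M} ({..<dim_col M} - G)"
proof -
  let ?m = "dim_row M" and ?n = "dim_col M" and ?E = "ExR k M R x"
  have fG: "finite G" using G finite_subset by blast
  have "crk (cM k M x) {..<?m} {..<?n} = crk ?E {..<?m} {..<?n}" using rk_Ex_cM[OF R inv] by simp
  also have "\<dots> \<le> crk ?E {..<?m - r} {..<?n} + crk ?E {?m - r..<?m} {..<?n}"
    using rk_row_subadd[of "{..<?m - r}" "{?m - r..<?m}" "{..<?n}" ?E] rows_split[OF r] by simp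
  also have "crk ?E {..<?m - r} {..<?n} \<le> ?m - r" using rk_le_rows[of "{..<?m - r}" "{..<?n}" ?E] by simp
  also have "crk ?E {?m - r..<?m} {..<?n} \<le> crk ?E {?m - r..<?m} G + crk ?E {?m - r..<?m} ({..<?n} - G)"
  proof -
    have "{..<?n} = G \<union> ({..<?n} - G)" using G by auto
    then show ?thesis using rk_subadd[of G "{..<?n} - G" ?E "{?m - r..<?m}"] fG by simp
  qed
  also have "crk ?E {?m - r..<?m} G = 0"
    using fG Ex_zero[OF Z] by (intro rk_zero) auto
  finally show ?thesis by linarith
qed




definition innerB :: "(nat \<Rightarrow> nat \<Rightarrow> bool) \<Rightarrow> nat \<Rightarrow> 'a::field aff mat \<Rightarrow> nat set \<Rightarrow> 'a mat \<Rightarrow> nat \<Rightarrow> bool" where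
  "innerB P k M F R r = (case split_block (const_mult R (col_perm F M)) (dim_row M - r) (card F) of
          (A, B, Z, C) \<Rightarrow>
            (\<forall>i<r. \<forall>j<card F. Z $$ (i,j) = (\<lambda>_. 0)) \<and>
            P (r + card F) (max (dim_row M) (dim_col M)) \<and>
            FRmR k A \<and> FCmR k C)"

lemma block_set_inner:
  "block_set P k M F \<longleftrightarrow> F \<subseteq> {0..<dim_col M} \<and>
     (\<exists>R r. R \<in> carrier_mat (dim_row M) (dim_row M) \<and> invertible_mat R \<and> r \<le> dim_row M \<and> innerB P k M F R r)"
  unfolding block_set_def innerB_def by (rule refl)

lemma block_data:
  fixes M :: "'a::field aff mat"
  shows "block_set P k M F \<longleftrightarrow> F \<subseteq> {..<dim_col M} \<and>
    (\<exists>R r. R \<in> carrier_mat (dim_row M) (dim_row M) \<and> invertible_mat R \<and> r \<le> dim_row M \<and>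
      ZeroB M R r F \<and> P (r + card F) (max (dim_row M) (dim_col M)) \<and>
      (card F = 0 \<or> MR k M R {..<dim_row M - r} F = dim_row M - r) \<and>
      (r = 0 \<or> MR k M R {dim_row M - r..<dim_row M} ({..<dim_col M} - F) = dim_col M - card F))"
proof (cases "F \<subseteq> {0..<dim_col M}")
  case False
  then have "\<not> F \<subseteq> {..<dim_col M}" by auto
  then show ?thesis unfolding block_set_inner using False by blast
next
  case True
  have eq: "innerB P k M F R r \<longleftrightarrow>
     ZeroB M R r F \<and> P (r + card F) (max (dim_row M) (dim_col M)) \<and>
     (card F = 0 \<or> MR k M R {..<dim_row M - r} F = dim_row M - r) \<and>
     (r = 0 \<or> MR k M R {dim_row M - r..<dim_row M} ({..<dim_col M} - F) = dim_col M - card F)"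
    if "R \<in> carrier_mat (dim_row M) (dim_row M)" "r \<le> dim_row M" for R r
    unfolding innerB_def by (rule block_char[OF that True])
  have T2: "F \<subseteq> {..<dim_col M}" using True by auto
  show ?thesis unfolding block_set_inner using eq True T2 by blast
qed




lemma finish_block:
  fixes M :: "'a::field aff mat"
  assumes G: "G \<subseteq> {..<dim_col M}"
    and R: "R \<in> carrier_mat (dim_row M) (dim_row M)" and inv: "invertible_mat R"
    and r: "r \<le> dim_row M" and Z: "ZeroB M R r G"
    and x0: "maxRank k M = crk (cM k M x0) {..<dim_row M} {..<dim_col M}"
    and tight: "maxRank k M + r + card G = dim_row M + dim_col M"
    and PP: "P (r + card G) (max (dim_row M) (dim_col M))"
  shows "block_set P k M G"
proof -
  let ?m = "dim_row M" and ?n = "dim_col M"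
  let ?T = "{..<?m - r}" and ?Bo = "{?m - r..<?m}" and ?Gc = "{..<?n} - G"
  have fG: "finite G" using G finite_subset by blast
  have cG: "card G \<le> ?n" using card_mono[OF _ G] by simp
  have FA: "MR k M R ?T G = ?m - r"
  proof (rule antisym)
    obtain x' where "MR k M R ?T G = crk (ExR k M R x') ?T G" using MR_obtain[OF fG] by blast
    also have "\<dots> \<le> card ?T" using rk_le_rows[of ?T G "ExR k M R x'"] fG by simp
    finally show "MR k M R ?T G \<le> ?m - r" by simp
  next
    have "crk (cM k M x0) {..<?m} {..<?n} \<le> crk (ExR k M R x0) ?T G + (?n - card G)"
      using lower_T[OF R inv r Z G] .
    moreover have "crk (ExR k M R x0) ?T G \<le> MR k M R ?T G" using MR_ge[OF fG] .
    ultimately show "?m - r \<le> MR k M R ?T G" using x0 tight cG by linarith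
  qed
  have fGc: "finite ?Gc" by simp
  have FC: "MR k M R ?Bo ?Gc = ?n - card G"
  proof (rule antisym)
    obtain x' where "MR k M R ?Bo ?Gc = crk (ExR k M R x') ?Bo ?Gc" using MR_obtain[OF fGc] by blast
    also have "\<dots> \<le> card ?Gc" using rk_le_card[OF fGc] .
    also have "card ?Gc = ?n - card G" using G fG by (simp add: card_Diff_subset)
    finally show "MR k M R ?Bo ?Gc \<le> ?n - card G" .
  next
    have "crk (cM k M x0) {..<?m} {..<?n} \<le> (?m - r) + crk (ExR k M R x0) ?Bo ?Gc"
      using lower_Bo[OF R inv r Z G] .
    moreover have "crk (ExR k M R x0) ?Bo ?Gc \<le> MR k M R ?Bo ?Gc" using MR_ge[OF fGc] .
    ultimately show "?n - card G \<le> MR k M R ?Bo ?Gc" using x0 tight r by linarith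
  qed
  show ?thesis unfolding block_data using G R inv r Z PP FA FC by blast
qed

lemma main_block:
  fixes M :: "'a::field aff mat"
  assumes aci: "aci_matrix k M" and P: "\<And>a b. P a b \<Longrightarrow> b \<le> a"
    and h1: "block_set P k M F1" and h2: "block_set P k M F2"
  shows "block_set P k M (F1 \<inter> F2) \<and> block_set P k M (F1 \<union> F2)"
proof -
  let ?m = "dim_row M" and ?n = "dim_col M"
  obtain R1 r1 where F1: "F1 \<subseteq> {..<?n}" and R1: "R1 \<in> carrier_mat ?m ?m" and i1: "invertible_mat R1"
    and r1: "r1 \<le> ?m" and Z1: "ZeroB M R1 r1 F1" and P1: "P (r1 + card F1) (max ?m ?n)"
    and A1: "card F1 = 0 \<or> MR k M R1 {..<?m - r1} F1 = ?m - r1"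
    and C1: "r1 = 0 \<or> MR k M R1 {?m - r1..<?m} ({..<?n} - F1) = ?n - card F1"
    using h1 unfolding block_data by blast
  obtain R2 r2 where F2: "F2 \<subseteq> {..<?n}" and R2: "R2 \<in> carrier_mat ?m ?m" and i2: "invertible_mat R2"
    and r2: "r2 \<le> ?m" and Z2: "ZeroB M R2 r2 F2" and P2: "P (r2 + card F2) (max ?m ?n)"
    and A2: "card F2 = 0 \<or> MR k M R2 {..<?m - r2} F2 = ?m - r2"
    and C2: "r2 = 0 \<or> MR k M R2 {?m - r2..<?m} ({..<?n} - F2) = ?n - card F2"
    using h2 unfolding block_data by blast
  obtain x0 where x0: "maxRank k M = crk (cM k M x0) {..<?m} {..<?n}" using maxRank_obtain by blast
  have fF1: "finite F1" using F1 finite_subset by blast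
  have fF2: "finite F2" using F2 finite_subset by blast
  have e1: "maxRank k M + r1 + card F1 = ?m + ?n"
  proof -
    obtain x where "?m + ?n \<le> crk (cM k M x) {..<?m} {..<?n} + r1 + card F1"
      using LB[OF aci R1 i1 r1 Z1 F1 P[OF P1] A1 C1] by blast
    moreover have "crk (cM k M x) {..<?m} {..<?n} \<le> maxRank k M" by (rule maxRank_ge)
    moreover have "crk (cM k M x0) {..<?m} {..<?n} + r1 + card F1 \<le> ?m + ?n" by (rule UB[OF R1 i1 r1 Z1 F1])
    ultimately show ?thesis using x0 by linarith
  qed
  have e2: "maxRank k M + r2 + card F2 = ?m + ?n"
  proof -
    obtain x where "?m + ?n \<le> crk (cM k M x) {..<?m} {..<?n} + r2 + card F2"
      using LB[OF aci R2 i2 r2 Z2 F2 P[OF P2] A2 C2] by blast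
    moreover have "crk (cM k M x) {..<?m} {..<?n} \<le> maxRank k M" by (rule maxRank_ge)
    moreover have "crk (cM k M x0) {..<?m} {..<?n} + r2 + card F2 \<le> ?m + ?n" by (rule UB[OF R2 i2 r2 Z2 F2])
    ultimately show ?thesis using x0 by linarith
  qed
  have b1: "betaN k M F1 + r1 \<le> ?m" using B1[OF R1 i1 r1 Z1 fF1] .
  have b2: "betaN k M F2 + r2 \<le> ?m" using B1[OF R2 i2 r2 Z2 fF2] .
  let ?U = "F1 \<union> F2" and ?I = "F1 \<inter> F2"
  have U: "?U \<subseteq> {..<?n}" using F1 F2 by auto
  have I: "?I \<subseteq> {..<?n}" using F1 by auto
  obtain RU rU where RU: "RU \<in> carrier_mat ?m ?m" and iU: "invertible_mat RU" and rU: "rU \<le> ?m"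
    and ZU: "ZeroB M RU rU ?U" and bU: "betaN k M ?U + rU = ?m"
    using B2[OF aci U] by blast
  obtain RI rI where RI: "RI \<in> carrier_mat ?m ?m" and iI: "invertible_mat RI" and rI: "rI \<le> ?m"
    and ZI: "ZeroB M RI rI ?I" and bI: "betaN k M ?I + rI = ?m"
    using B2[OF aci I] by blast
  have uU: "maxRank k M + rU + card ?U \<le> ?m + ?n" using UB[OF RU iU rU ZU U, of k x0] x0 by simp
  have uI: "maxRank k M + rI + card ?I \<le> ?m + ?n" using UB[OF RI iI rI ZI I, of k x0] x0 by simp
  have sub: "betaN k M ?U + betaN k M ?I \<le> betaN k M F1 + betaN k M F2"
  proof -
    have "F1 \<times> {..k} \<union> F2 \<times> {..k} = ?U \<times> {..k}" by auto
    moreover have "F1 \<times> {..k} \<inter> F2 \<times> {..k} = ?I \<times> {..k}" by auto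
    ultimately show ?thesis
      using rk_submod[of "F1 \<times> {..k}" "F2 \<times> {..k}" "Nc M" "{..<?m}"] fF1 fF2
      unfolding betaN_def by simp
  qed
  have cc: "card ?U + card ?I = card F1 + card F2" using card_Un_Int[OF fF1 fF2] by simp
  have tU: "maxRank k M + rU + card ?U = ?m + ?n" using uU uI e1 e2 b1 b2 bU bI sub cc by linarith
  have tI: "maxRank k M + rI + card ?I = ?m + ?n" using uU uI e1 e2 b1 b2 bU bI sub cc by linarith
  have PU: "P (rU + card ?U) (max ?m ?n)" using P1 tU e1 by (metis add.assoc add_left_cancel)
  have PI: "P (rI + card ?I) (max ?m ?n)" using P1 tI e1 by (metis add.assoc add_left_cancel)
  show ?thesis
    using finish_block[where P = P, OF I RI iI rI ZI x0 tI PI] finish_block[where P = P, OF U RU iU rU ZU x0 tU PU] by blast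
qed

theorem theorem5p6:
  fixes k :: nat and M :: "'a::field aff mat" and F1 F2 :: "nat set"
  assumes "aci_matrix k M"
  shows "(factor_set k M F1 \<and> factor_set k M F2 \<longrightarrow>
            factor_set k M (F1 \<inter> F2) \<and> factor_set k M (F1 \<union> F2)) \<and>
         (semifactor_set k M F1 \<and> semifactor_set k M F2 \<longrightarrow>
            semifactor_set k M (F1 \<inter> F2) \<and> semifactor_set k M (F1 \<union> F2))"
proof -
  have m1: "block_set (\<lambda>a b. a > b) k M (F1 \<inter> F2) \<and> block_set (\<lambda>a b. a > b) k M (F1 \<union> F2)"
    if "block_set (\<lambda>a b. a > b) k M F1" "block_set (\<lambda>a b. a > b) k M F2"
    by (rule main_block[OF assms]) (use that in auto)
  have m2: "block_set (\<lambda>a b. a = b) k M (F1 \<inter> F2) \<and> block_set (\<lambda>a b. a = b) k M (F1 \<union> F2)"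
    if "block_set (\<lambda>a b. a = b) k M F1" "block_set (\<lambda>a b. a = b) k M F2"
    by (rule main_block[OF assms]) (use that in auto)
  show ?thesis
    unfolding factor_set_def semifactor_set_def using m1 m2 by blast
qed


end
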